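(* Let $(X,\sigma_X)$, $(Y,\sigma_Y)$ be one-sided full shifts and $\pi:X\to Y$ a one-block factor map. Let $f\in Bow(X)$, $\mu_f$ its unique invariant Gibbs measure, $f_n(x)=e^{f(x)+\cdots+f(\sigma_X^{n-1}x)}$, and $\bar g_n(y)=\sup_{E_n(y)}\sum_{x\in E_n(y)}f_n(x)$. Suppose there exists $A>0$ such that $$\frac1A\le\frac{\bar g_n(y)}{|\pi^{-1}[y_1\cdots y_n]|\,f_n(x)}\le A$$ for all $n$, $y\in Y$, and all $x\in[x_1\cdots x_n]$ with $\pi([x_1\cdots x_n])\subseteq[y_1\cdots y_n]$. Then $\nu=\pi\mu_f$ is the unique invariant Gibbs measure for a continuous function on $Y$ belonging to $Bow(Y)$.
   Context: Full shift: $\{1,\dots,k\}^{\mathbb N}$ with left shift. One-block factor map: continuous surjection commuting with shifts, $\pi(x)_i$ depending only on $x_i$. $Bow(Z)=\{f\in C(Z):\sup_n\sup\{S_nf(z)-S_nf(z'):z_i=z'_i,1\le i\le n\}<\infty\}$, $S_nf=\sum_{i=0}^{n-1}f\circ\sigma^i$; such $f$ has a unique invariant Gibbs measure ($\mu$ invariant with $C_0^{-1}<\mu([z_1\cdots z_n])/e^{-nP(f)+S_nf(z)}<C_0$ for all $z,n$). $E_n(y)$: any set with exactly one point from each cylinder $[x_1\cdots x_n]$ of $X$ with $\pi([x_1\cdots x_n])\subseteq[y_1\cdots y_n]$; the sup is over all such choices. $|\pi^{-1}[y_1\cdots y_n]|$ is the number of such cylinders. *)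

theory Defs
  imports "HOL-Probability.Probability"
begin

text \<open>One-sided full shift on the alphabet {1..k}, as a subset of nat \<Rightarrow> nat carrying the
  product topology (Function_Topology). Coordinates are indexed from 0, so the paper's
  word x_1 ... x_n corresponds to x 0, ..., x (n-1).\<close>

definition fullshift :: "nat \<Rightarrow> (nat \<Rightarrow> nat) set" where
  "fullshift k = {x. \<forall>i. x i \<in> {1..k}}"

definition shift :: "(nat \<Rightarrow> nat) \<Rightarrow> (nat \<Rightarrow> nat)" where
  "shift x = (\<lambda>i. x (Suc i))"

definition cyl :: "nat \<Rightarrow> (nat \<Rightarrow> nat) \<Rightarrow> nat \<Rightarrow> (nat \<Rightarrow> nat) set" where
  "cyl k x n = {z \<in> fullshift k. \<forall>i<n. z i = x i}"

definition birkhoff :: "((nat \<Rightarrow> nat) \<Rightarrow> real) \<Rightarrow> nat \<Rightarrow> (nat \<Rightarrow> nat) \<Rightarrow> real" where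
  "birkhoff f n x = (\<Sum>i<n. f ((shift ^^ i) x))"

definition Bow :: "nat \<Rightarrow> ((nat \<Rightarrow> nat) \<Rightarrow> real) set" where
  "Bow k = {f. continuous_on (fullshift k) f \<and>
     (\<exists>B. \<forall>n. \<forall>z\<in>fullshift k. \<forall>z'\<in>fullshift k. (\<forall>i<n. z i = z' i) \<longrightarrow>
              birkhoff f n z - birkhoff f n z' \<le> B)}"

definition shift_borel :: "nat \<Rightarrow> (nat \<Rightarrow> nat) measure" where
  "shift_borel k = restrict_space borel (fullshift k)"

definition shift_invariant :: "(nat \<Rightarrow> nat) measure \<Rightarrow> bool" where
  "shift_invariant M \<longleftrightarrow> shift \<in> measurable M M \<and> distr M M shift = M"

text \<open>Invariant Gibbs measure for f on the full shift on k symbols (Bowen's definition,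
  the constant P being necessarily the topological pressure P(f)).\<close>
definition inv_gibbs :: "nat \<Rightarrow> ((nat \<Rightarrow> nat) \<Rightarrow> real) \<Rightarrow> (nat \<Rightarrow> nat) measure \<Rightarrow> bool" where
  "inv_gibbs k f M \<longleftrightarrow> prob_space M \<and> sets M = sets (shift_borel k) \<and> shift_invariant M \<and>
     (\<exists>P C0. C0 > 0 \<and> (\<forall>z\<in>fullshift k. \<forall>n.
         1 / C0 < measure M (cyl k z n) / exp (- real n * P + birkhoff f n z) \<and>
         measure M (cyl k z n) / exp (- real n * P + birkhoff f n z) < C0))"

definition one_block_factor :: "nat \<Rightarrow> nat \<Rightarrow> ((nat \<Rightarrow> nat) \<Rightarrow> (nat \<Rightarrow> nat)) \<Rightarrow> bool" where
  "one_block_factor k l \<pi> \<longleftrightarrow> \<pi> ` fullshift k = fullshift l \<and> continuous_on (fullshift k) \<pi> \<and>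
     (\<forall>x\<in>fullshift k. \<pi> (shift x) = shift (\<pi> x)) \<and>
     (\<exists>\<phi>. \<forall>x\<in>fullshift k. \<forall>i. \<pi> x i = \<phi> (x i))"

text \<open>The cylinders [x_1...x_n] of X with \<pi>([x_1...x_n]) \<subseteq> [y_1...y_n];
  their number is |\<pi>^{-1}[y_1...y_n]|.\<close>
definition preimage_cyls ::
  "nat \<Rightarrow> nat \<Rightarrow> ((nat \<Rightarrow> nat) \<Rightarrow> (nat \<Rightarrow> nat)) \<Rightarrow> nat \<Rightarrow> (nat \<Rightarrow> nat) \<Rightarrow> (nat \<Rightarrow> nat) set set" where
  "preimage_cyls k l \<pi> n y = {c. \<exists>x\<in>fullshift k. c = cyl k x n \<and> \<pi> ` c \<subseteq> cyl l y n}"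

definition E_sets ::
  "nat \<Rightarrow> nat \<Rightarrow> ((nat \<Rightarrow> nat) \<Rightarrow> (nat \<Rightarrow> nat)) \<Rightarrow> nat \<Rightarrow> (nat \<Rightarrow> nat) \<Rightarrow> (nat \<Rightarrow> nat) set set" where
  "E_sets k l \<pi> n y = {E. E \<subseteq> \<Union> (preimage_cyls k l \<pi> n y) \<and>
      (\<forall>c\<in>preimage_cyls k l \<pi> n y. \<exists>!x. x \<in> E \<and> x \<in> c)}"

definition gbar ::
  "nat \<Rightarrow> nat \<Rightarrow> ((nat \<Rightarrow> nat) \<Rightarrow> (nat \<Rightarrow> nat)) \<Rightarrow> ((nat \<Rightarrow> nat) \<Rightarrow> real) \<Rightarrow> nat \<Rightarrow> (nat \<Rightarrow> nat) \<Rightarrow> real" where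
  "gbar k l \<pi> f n y = (SUP E \<in> E_sets k l \<pi> n y. \<Sum>x\<in>E. exp (birkhoff f n x))"

end

theory Submission
  imports Defs
begin
definition alg :: "nat \<Rightarrow> nat \<Rightarrow> (nat \<Rightarrow> nat) set set" where
  "alg l n = {A. A \<subseteq> fullshift l \<and> (\<forall>x\<in>fullshift l. \<forall>z\<in>fullshift l. (\<forall>i<n. x i = z i) \<longrightarrow> (x \<in> A \<longleftrightarrow> z \<in> A))}"

definition LC :: "nat \<Rightarrow> nat \<Rightarrow> (nat \<Rightarrow> nat) set set" where
  "LC l n = (\<lambda>x. cyl l x n) ` fullshift l"

lemma cyl_sub: "cyl l x n \<subseteq> fullshift l"
  by (auto simp: cyl_def)

lemma cyl_self: "x \<in> fullshift l \<Longrightarrow> x \<in> cyl l x n"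
  by (auto simp: cyl_def)

lemma cyl_eqI: "(\<forall>i<n. x i = z i) \<Longrightarrow> cyl l x n = cyl l z n"
  by (auto simp: cyl_def)

lemma cyl_mem_eq: "z \<in> cyl l x n \<Longrightarrow> cyl l z n = cyl l x n"
  by (rule cyl_eqI) (auto simp: cyl_def)

lemma cyl_disj: "c \<in> LC l n \<Longrightarrow> d \<in> LC l n \<Longrightarrow> c \<noteq> d \<Longrightarrow> c \<inter> d = {}"
proof (rule ccontr)
  assume "c \<in> LC l n" "d \<in> LC l n" "c \<noteq> d" "c \<inter> d \<noteq> {}"
  then obtain x y z where "c = cyl l x n" "d = cyl l y n" "z \<in> c" "z \<in> d" by (auto simp: LC_def)
  then show False using cyl_mem_eq[of z l x n] cyl_mem_eq[of z l y n] \<open>c \<noteq> d\<close> by simp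
qed

lemma finite_LC: "finite (LC l n)"
proof -
  have "LC l n \<subseteq> (\<lambda>w. cyl l w n) ` (Pi\<^sub>E {..<n} (\<lambda>_. {1..l}))"
  proof
    fix c assume "c \<in> LC l n"
    then obtain x where x: "x \<in> fullshift l" "c = cyl l x n" by (auto simp: LC_def)
    have "c = cyl l (restrict x {..<n}) n" using x by (auto intro!: cyl_eqI)
    moreover have "restrict x {..<n} \<in> Pi\<^sub>E {..<n} (\<lambda>_. {1..l})" using x(1) by (auto simp: fullshift_def)
    ultimately show "c \<in> (\<lambda>w. cyl l w n) ` (Pi\<^sub>E {..<n} (\<lambda>_. {1..l}))" by blast
  qed
  moreover have "finite (Pi\<^sub>E {..<n} (\<lambda>_. {1..l::nat}))" by (rule finite_PiE) auto
  ultimately show ?thesis by (meson finite_imageI finite_subset)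
qed

lemma fullshift_closed: "closed (fullshift l)"
proof -
  have "fullshift l = (\<Inter>i. (\<lambda>x. x i) -` {1..l})" by (auto simp: fullshift_def)
  moreover have "closed ((\<lambda>x::nat\<Rightarrow>nat. x i) -` {1..l})" for i
    by (rule closed_vimage) (auto intro: continuous_on_product_coordinates)
  ultimately show ?thesis by auto
qed

lemma space_sb: "space (shift_borel l) = fullshift l"
  by (simp add: shift_borel_def space_restrict_space)

lemma cyl_closed: "closed (cyl l x n)"
proof -
  have "cyl l x n = fullshift l \<inter> (\<Inter>i\<in>{..<n}. {z. z i = x i})" by (auto simp: cyl_def)
  moreover have "closed {z::nat\<Rightarrow>nat. z i = x i}" for i
    by (rule closed_Collect_eq) (auto intro: continuous_on_product_coordinates)
  ultimately show ?thesis using fullshift_closed by (auto intro!: closed_Int closed_INT)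
qed

lemma cyl_sets: "cyl l x n \<in> sets (shift_borel l)"
  unfolding shift_borel_def sets_restrict_space
  using cyl_closed[of l x n] cyl_sub[of l x n] by (auto intro!: image_eqI[where x="cyl l x n"])

lemma LC_sets: "c \<in> LC l n \<Longrightarrow> c \<in> sets (shift_borel l)"
  by (auto simp: LC_def cyl_sets)

lemma alg_cyl: "A \<in> alg l n \<Longrightarrow> x \<in> A \<Longrightarrow> cyl l x n \<subseteq> A"
  unfolding alg_def cyl_def by auto

lemma alg_Union: "A \<in> alg l n \<Longrightarrow> A = \<Union>{c\<in>LC l n. c \<subseteq> A}"
proof
  assume A: "A \<in> alg l n"
  show "A \<subseteq> \<Union>{c\<in>LC l n. c \<subseteq> A}"
  proof
    fix x assume "x \<in> A"
    moreover have "x \<in> fullshift l" using A \<open>x\<in>A\<close> by (auto simp: alg_def)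
    ultimately show "x \<in> \<Union>{c\<in>LC l n. c \<subseteq> A}"
      using alg_cyl[OF A] cyl_self[of x l n] by (auto simp: LC_def)
  qed
next
  show "\<Union>{c\<in>LC l n. c \<subseteq> A} \<subseteq> A" by blast
qed

lemma alg_sets: "A \<in> alg l n \<Longrightarrow> A \<in> sets (shift_borel l)"
  apply (subst alg_Union, assumption)
  apply (rule sets.finite_Union)
  using finite_LC LC_sets by auto

lemma cyl_alg: "cyl l x n \<in> alg l n"
  unfolding alg_def cyl_def by auto

lemma alg_mono: assumes "A \<in> alg l n" "n \<le> m" shows "A \<in> alg l m"
proof -
  have "x \<in> A \<longleftrightarrow> z \<in> A" if "x \<in> fullshift l" "z \<in> fullshift l" "\<forall>i<m. x i = z i" for x z
  proof -
    have "\<forall>i<n. x i = z i" using that(3) assms(2) by simp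
    then show ?thesis using assms(1) that(1,2) unfolding alg_def by blast
  qed
  then show ?thesis using assms(1) unfolding alg_def by blast
qed

lemma alg_compl: assumes "A \<in> alg l n" shows "fullshift l - A \<in> alg l n"
proof -
  have "x \<in> A \<longleftrightarrow> z \<in> A" if "x \<in> fullshift l" "z \<in> fullshift l" "\<forall>i<n. x i = z i" for x z
    using assms that unfolding alg_def by blast
  then show ?thesis unfolding alg_def by blast
qed

lemma alg_Int: assumes "A \<in> alg l n" "B \<in> alg l n" shows "A \<inter> B \<in> alg l n"
proof -
  have "x \<in> A \<longleftrightarrow> z \<in> A" "x \<in> B \<longleftrightarrow> z \<in> B"
    if "x \<in> fullshift l" "z \<in> fullshift l" "\<forall>i<n. x i = z i" for x z
    using assms that unfolding alg_def by blast+
  then show ?thesis using assms unfolding alg_def by blast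
qed

lemma alg_Un: assumes "A \<in> alg l n" "B \<in> alg l n" shows "A \<union> B \<in> alg l n"
proof -
  have "x \<in> A \<longleftrightarrow> z \<in> A" "x \<in> B \<longleftrightarrow> z \<in> B"
    if "x \<in> fullshift l" "z \<in> fullshift l" "\<forall>i<n. x i = z i" for x z
    using assms that unfolding alg_def by blast+
  then show ?thesis using assms unfolding alg_def by blast
qed

lemma alg_full: "fullshift l \<in> alg l n"
  unfolding alg_def by blast

lemma open_cyl:
  fixes U :: "(nat \<Rightarrow> nat) set"
  assumes "open U" "x \<in> U"
  shows "\<exists>n. \<forall>z. (\<forall>i<n. z i = x i) \<longrightarrow> z \<in> U"
proof -
  from assms have "openin (product_topology (\<lambda>i. euclidean) UNIV) U" by (simp add: open_fun_def)
  from product_topology_open_contains_basis[OF this assms(2)]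
  obtain X where X: "x \<in> (\<Pi>\<^sub>E i\<in>UNIV. X i)" "finite {i. X i \<noteq> topspace (euclidean::nat topology)}"
     "(\<Pi>\<^sub>E i\<in>UNIV. X i) \<subseteq> U" by auto
  from X(2) obtain n where n: "{i. X i \<noteq> UNIV} \<subseteq> {..<n}" using finite_nat_bounded by fastforce
  show ?thesis
  proof (intro exI allI impI)
    fix z :: "nat \<Rightarrow> nat" assume z: "\<forall>i<n. z i = x i"
    have "z \<in> (\<Pi>\<^sub>E i\<in>UNIV. X i)"
    proof (simp add: PiE_iff, intro allI)
      fix i show "z i \<in> X i"
      proof (cases "i < n")
        case True then show ?thesis using z X(1) by (auto simp: PiE_iff)
      next
        case False then show ?thesis using n by auto
      qed
    qed
    then show "z \<in> U" using X(3) by auto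
  qed
qed

lemma sets_sb_gen: "sets (shift_borel l) = sigma_sets (fullshift l) (\<Union>n. alg l n)"
proof
  show "sigma_sets (fullshift l) (\<Union>n. alg l n) \<subseteq> sets (shift_borel l)"
  proof (rule sets.sigma_sets_subset')
    show "(\<Union>n. alg l n) \<subseteq> sets (shift_borel l)" using alg_sets by (intro subsetI) auto
    show "fullshift l \<in> sets (shift_borel l)" using sets.top[of "shift_borel l"] by (simp add: space_sb)
  qed
next
  have "fullshift l \<inter> X \<in> sigma_sets (fullshift l) (\<Union>n. alg l n)" if "X \<in> sigma_sets UNIV {S. open S}" for X
    using that
  proof (induction rule: sigma_sets.induct)
    case (Basic U)
    then have U: "open U" by simp
    define A where "A n = {x \<in> fullshift l. cyl l x n \<subseteq> U}" for n
    have "A n \<in> alg l n" for n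
      unfolding alg_def
    proof (intro CollectI conjI ballI impI)
      show "A n \<subseteq> fullshift l" by (auto simp: A_def)
      fix x z assume xz: "x \<in> fullshift l" "z \<in> fullshift l" "\<forall>i<n. x i = z i"
      then have "cyl l x n = cyl l z n" by (intro cyl_eqI)
      then show "x \<in> A n \<longleftrightarrow> z \<in> A n" using xz by (simp add: A_def)
    qed
    then have "\<Union>(range A) \<in> sigma_sets (fullshift l) (\<Union>n. alg l n)"
      by (intro sigma_sets.Union sigma_sets.Basic) blast
    moreover have "fullshift l \<inter> U = \<Union>(range A)"
    proof
      show "fullshift l \<inter> U \<subseteq> \<Union>(range A)"
      proof
        fix x assume x: "x \<in> fullshift l \<inter> U"
        then obtain n where "\<forall>z. (\<forall>i<n. z i = x i) \<longrightarrow> z \<in> U" using open_cyl[OF U] by blast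
        then have "x \<in> A n" using x unfolding A_def cyl_def by auto
        then show "x \<in> \<Union>(range A)" by blast
      qed
      show "\<Union>(range A) \<subseteq> fullshift l \<inter> U"
      proof (rule subsetI)
        fix x assume "x \<in> \<Union>(range A)"
        then obtain n where "x \<in> A n" by blast
        then show "x \<in> fullshift l \<inter> U" using cyl_self[of x l n] by (auto simp: A_def)
      qed
    qed
    ultimately show ?case by simp
  next
    case Empty then show ?case by (simp add: sigma_sets.Empty)
  next
    case (Compl a)
    have "fullshift l \<inter> (UNIV - a) = fullshift l - (fullshift l \<inter> a)" by blast
    then show ?case using Compl by (simp add: sigma_sets.Compl)
  next
    case (Union a)
    have "fullshift l \<inter> \<Union>(range a) = (\<Union>i. fullshift l \<inter> a i)" by blast
    then show ?case using Union sigma_sets.Union[of "\<lambda>i. fullshift l \<inter> a i"] by simp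
  qed
  then show "sets (shift_borel l) \<subseteq> sigma_sets (fullshift l) (\<Union>n. alg l n)"
    unfolding shift_borel_def sets_restrict_space sets_borel by (intro image_subsetI) (simp add: Int_commute)
qed

lemma measure_decomp:
  assumes fm: "finite_measure N" and A: "A \<in> alg l n"
    and G: "\<And>c. c \<in> LC l n \<Longrightarrow> G \<inter> T -` c \<in> sets N"
  shows "measure N (G \<inter> T -` A) = (\<Sum>c\<in>{c\<in>LC l n. c \<subseteq> A}. measure N (G \<inter> T -` c))"
proof -
  let ?S = "{c\<in>LC l n. c \<subseteq> A}"
  have "G \<inter> T -` A = (\<Union>c\<in>?S. G \<inter> T -` c)"
  proof -
    have "A = \<Union>?S" by (rule alg_Union[OF A])
    then have "T -` A = (\<Union>c\<in>?S. T -` c)" by (metis vimage_Union)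
    then show ?thesis by blast
  qed
  moreover have "measure N (\<Union>c\<in>?S. G \<inter> T -` c) = (\<Sum>c\<in>?S. measure N (G \<inter> T -` c))"
  proof (rule finite_measure.finite_measure_finite_Union[OF fm])
    show "finite ?S" using finite_LC[of l n] by simp
    show "(\<lambda>c. G \<inter> T -` c) ` ?S \<subseteq> sets N" using G by blast
    show "disjoint_family_on (\<lambda>c. G \<inter> T -` c) ?S"
      unfolding disjoint_family_on_def
    proof (intro ballI impI)
      fix c d assume "c \<in> ?S" "d \<in> ?S" "c \<noteq> d"
      then have "c \<inter> d = {}" using cyl_disj by blast
      then show "G \<inter> T -` c \<inter> (G \<inter> T -` d) = {}" by blast
    qed
  qed
  ultimately show ?thesis by simp
qed

lemma alg_empty: "{} \<in> alg l n"
  unfolding alg_def by blast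

lemma alg_UN: "(\<And>i::nat. i < m \<Longrightarrow> A i \<in> alg l n) \<Longrightarrow> (\<Union>i<m. A i) \<in> alg l n"
proof (induction m)
  case 0 then show ?case by (simp add: alg_empty)
next
  case (Suc m)
  have "(\<Union>i<Suc m. A i) = (\<Union>i<m. A i) \<union> A m" by (auto simp: lessThan_Suc)
  then show ?case using Suc alg_Un by simp
qed

lemma tail_small:
  fixes B :: "nat \<Rightarrow> 'a set"
  assumes fm: "finite_measure N" and B: "\<And>i. B i \<in> sets N" and e: "e > 0"
  shows "\<exists>m. \<forall>m'\<ge>m. measure N ((\<Union>i. B i) - (\<Union>i<m'. B i)) < e"
proof -
  define F where "F m = (\<Union>i<m. B i)" for m
  have Fs: "F m \<in> sets N" for m unfolding F_def using B by (intro sets.finite_UN) auto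
  have inc: "incseq F" unfolding F_def by (intro monoI) (auto, meson order_less_le_trans lessThan_iff)
  have UF: "(\<Union>m. F m) = (\<Union>i. B i)" unfolding F_def by auto
  have lim: "(\<lambda>m. measure N (F m)) \<longlonglongrightarrow> measure N (\<Union>i. B i)"
    using finite_measure.finite_Lim_measure_incseq[OF fm, of F] Fs inc UF by auto
  from LIMSEQ_D[OF lim e] obtain m where m: "\<And>m'. m' \<ge> m \<Longrightarrow> norm (measure N (F m') - measure N (\<Union>i. B i)) < e"
    by blast
  have "measure N ((\<Union>i. B i) - F m') < e" if "m' \<ge> m" for m'
  proof -
    have sub: "F m' \<subseteq> (\<Union>i. B i)" unfolding F_def by auto
    have "measure N ((\<Union>i. B i) - F m') = measure N (\<Union>i. B i) - measure N (F m')"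
      using finite_measure.finite_measure_Diff[OF fm _ Fs sub] B by auto
    then show ?thesis using m[OF that] by auto
  qed
  then show ?thesis unfolding F_def by blast
qed

definition sdiff :: "'a set \<Rightarrow> 'a set \<Rightarrow> 'a set" where
  "sdiff A B = (A - B) \<union> (B - A)"

lemma approx:
  assumes fm1: "finite_measure N1" and fm2: "finite_measure N2"
    and s1: "sets N1 = sets (shift_borel l)" and s2: "sets N2 = sets (shift_borel l)"
    and B: "B \<in> sets (shift_borel l)"
  shows "\<forall>e>0. \<exists>n A. A \<in> alg l n \<and> measure N1 (sdiff A B) < e \<and> measure N2 (sdiff A B) < e"
proof -
  have algs: "A \<in> sets (shift_borel l)" if "A \<in> alg l n" for A n using that alg_sets by blast
  have sdiff_sets: "sdiff A C \<in> sets (shift_borel l)" if "A \<in> sets (shift_borel l)" "C \<in> sets (shift_borel l)" for A C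
    using that unfolding sdiff_def by auto
  have "B \<in> sigma_sets (fullshift l) (\<Union>n. alg l n)" using B sets_sb_gen by auto
  then show ?thesis
  proof (induction rule: sigma_sets.induct)
    case (Basic a)
    then obtain n where "a \<in> alg l n" by blast
    moreover have "sdiff a a = {}" unfolding sdiff_def by blast
    ultimately show ?case by (intro allI impI exI[of _ n] exI[of _ a]) simp
  next
    case Empty
    have "sdiff {} {} = {}" unfolding sdiff_def by blast
    then show ?case using alg_empty[of l 0] by (intro allI impI exI[of _ 0] exI[of _ "{}"]) (simp add: sdiff_def)
  next
    case (Compl a)
    have asets: "a \<in> sets (shift_borel l)" using Compl(1) sets_sb_gen by auto
    then have asub: "a \<subseteq> fullshift l" using sets.sets_into_space space_sb by metis
    show ?case
    proof (intro allI impI)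
      fix e :: real assume e: "e > 0"
      then obtain n A where A: "A \<in> alg l n" "measure N1 (sdiff A a) < e" "measure N2 (sdiff A a) < e"
        using Compl(2) by blast
      have Asub: "A \<subseteq> fullshift l" using A(1) by (auto simp: alg_def)
      have "sdiff (fullshift l - A) (fullshift l - a) = sdiff A a"
        unfolding sdiff_def using Asub asub by blast
      then show "\<exists>n A. A \<in> alg l n \<and> measure N1 (sdiff A (fullshift l - a)) < e \<and> measure N2 (sdiff A (fullshift l - a)) < e"
        using A alg_compl by metis
    qed
  next
    case (Union a)
    have asets: "a i \<in> sets (shift_borel l)" for i using Union(1) sets_sb_gen by auto
    show ?case
    proof (intro allI impI)
      fix e :: real assume e: "e > 0"
      obtain m1 where m1: "\<And>m'. m' \<ge> m1 \<Longrightarrow> measure N1 ((\<Union>i. a i) - (\<Union>i<m'. a i)) < e/2"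
        using tail_small[OF fm1, of a "e/2"] asets s1 e by auto
      obtain m2 where m2: "\<And>m'. m' \<ge> m2 \<Longrightarrow> measure N2 ((\<Union>i. a i) - (\<Union>i<m'. a i)) < e/2"
        using tail_small[OF fm2, of a "e/2"] asets s2 e by auto
      define m where "m = max m1 m2"
      define d where "d = e / (2 * (real m + 1))"
      have d: "d > 0" using e by (simp add: d_def)
      have "\<forall>i. \<exists>n A. A \<in> alg l n \<and> measure N1 (sdiff A (a i)) < d \<and> measure N2 (sdiff A (a i)) < d"
        using Union(2) d by blast
      then obtain nn AA where AA: "\<And>i. AA i \<in> alg l (nn i)" "\<And>i. measure N1 (sdiff (AA i) (a i)) < d"
        "\<And>i. measure N2 (sdiff (AA i) (a i)) < d"
        by metis
      define n where "n = (\<Sum>i<m. nn i)"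
      have AAn: "AA i \<in> alg l n" if "i < m" for i
      proof (rule alg_mono[OF AA(1)])
        show "nn i \<le> n" unfolding n_def using that by (intro member_le_sum) auto
      qed
      define A where "A = (\<Union>i<m. AA i)"
      have Aalg: "A \<in> alg l n" unfolding A_def using AAn by (intro alg_UN) auto
      have AAs: "AA i \<in> sets (shift_borel l)" for i using AA(1) algs by blast
      have incl: "sdiff A (\<Union>i. a i) \<subseteq> (\<Union>i<m. sdiff (AA i) (a i)) \<union> ((\<Union>i. a i) - (\<Union>i<m. a i))"
        unfolding sdiff_def A_def by blast
      have bound: "measure N (sdiff A (\<Union>i. a i)) < e"
        if fm: "finite_measure N" and sN: "sets N = sets (shift_borel l)"
          and Nd: "\<And>i. measure N (sdiff (AA i) (a i)) < d"
          and Nt: "measure N ((\<Union>i. a i) - (\<Union>i<m. a i)) < e/2" for N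
      proof -
        have s1': "(\<Union>i<m. sdiff (AA i) (a i)) \<in> sets N" using sN AAs asets sdiff_sets by auto
        have s2': "((\<Union>i. a i) - (\<Union>i<m. a i)) \<in> sets N" using sN asets by auto
        have "measure N (sdiff A (\<Union>i. a i)) \<le> measure N ((\<Union>i<m. sdiff (AA i) (a i)) \<union> ((\<Union>i. a i) - (\<Union>i<m. a i)))"
          using finite_measure.finite_measure_mono[OF fm incl] s1' s2' by auto
        also have "\<dots> \<le> measure N (\<Union>i<m. sdiff (AA i) (a i)) + measure N ((\<Union>i. a i) - (\<Union>i<m. a i))"
          using measure_Un_le[OF s1' s2'] .
        also have "measure N (\<Union>i<m. sdiff (AA i) (a i)) \<le> (\<Sum>i<m. measure N (sdiff (AA i) (a i)))"
          using measure_UNION_le[of "{..<m}" "\<lambda>i. sdiff (AA i) (a i)" N] sN AAs asets sdiff_sets by auto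
        also have "\<dots> \<le> (\<Sum>i<m. d)" using Nd by (intro sum_mono) (simp add: less_imp_le)
        also have "\<dots> = real m * d" by simp
        also have "real m * d \<le> e / 2"
          using e unfolding d_def by (simp add: field_simps)
        finally show ?thesis using Nt by linarith
      qed
      have "measure N1 (sdiff A (\<Union>i. a i)) < e"
        by (rule bound[OF fm1 s1 AA(2) m1]) (simp add: m_def)
      moreover have "measure N2 (sdiff A (\<Union>i. a i)) < e"
        by (rule bound[OF fm2 s2 AA(3) m2]) (simp add: m_def)
      ultimately show "\<exists>n A. A \<in> alg l n \<and> measure N1 (sdiff A (\<Union>i. a i)) < e \<and> measure N2 (sdiff A (\<Union>i. a i)) < e"
        using Aalg by blast
    qed
  qed
qed

lemma shift_pow: "(shift ^^ n) x = (\<lambda>i. x (i + n))"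
  by (induction n arbitrary: x) (auto simp: shift_def)

lemma shift_fullshift: "x \<in> fullshift l \<Longrightarrow> shift x \<in> fullshift l"
  by (auto simp: shift_def fullshift_def)

lemma shift_pow_fullshift: "x \<in> fullshift l \<Longrightarrow> (shift ^^ n) x \<in> fullshift l"
  by (auto simp: shift_pow fullshift_def)

lemma shift_meas: "shift \<in> measurable (shift_borel l) (shift_borel l)"
proof -
  have c: "continuous_on (fullshift l) shift"
    unfolding shift_def by (intro continuous_on_coordinatewise_then_product continuous_on_subset[OF continuous_on_product_coordinates]) auto
  have "shift \<in> borel_measurable (restrict_space borel (fullshift l))"
    by (rule borel_measurable_continuous_on_restrict[OF c])
  then show ?thesis unfolding shift_borel_def
    by (intro measurable_restrict_space2) (auto simp: space_restrict_space shift_fullshift)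
qed

lemma shift_pow_meas: "(shift ^^ n) \<in> measurable (shift_borel l) (shift_borel l)"
proof (induction n)
  case 0 then show ?case by simp
next
  case (Suc n)
  then show ?case using measurable_comp[OF Suc shift_meas] by (simp add: comp_def)
qed

lemma birkhoff_add: "birkhoff g (n + p) z = birkhoff g n z + birkhoff g p ((shift ^^ n) z)"
proof (induction p)
  case 0 then show ?case by (simp add: birkhoff_def)
next
  case (Suc p)
  have "(shift ^^ (n + p)) z = (shift ^^ p) ((shift ^^ n) z)" by (simp add: shift_pow add.commute add.left_commute)
  then show ?case using Suc by (simp add: birkhoff_def)
qed

definition gibbs_bd :: "nat \<Rightarrow> ((nat \<Rightarrow> nat) \<Rightarrow> real) \<Rightarrow> (nat \<Rightarrow> nat) measure \<Rightarrow> real \<Rightarrow> real \<Rightarrow> bool" where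
  "gibbs_bd l g M P C \<longleftrightarrow> C > 0 \<and> (\<forall>z\<in>fullshift l. \<forall>n.
         measure M (cyl l z n) < C * exp (- real n * P + birkhoff g n z) \<and>
         exp (- real n * P + birkhoff g n z) < C * measure M (cyl l z n))"

lemma inv_gibbs_D:
  assumes "inv_gibbs l g M"
  shows "prob_space M" "sets M = sets (shift_borel l)" "space M = fullshift l"
    "shift \<in> measurable M M" "distr M M shift = M" "\<exists>P C. gibbs_bd l g M P C"
proof -
  show "prob_space M" "sets M = sets (shift_borel l)" "shift \<in> measurable M M" "distr M M shift = M"
    using assms by (auto simp: inv_gibbs_def shift_invariant_def)
  then show "space M = fullshift l" using sets_eq_imp_space_eq space_sb by metis
  from assms obtain P C0 where C0: "C0 > 0" and b: "\<forall>z\<in>fullshift l. \<forall>n.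
         1 / C0 < measure M (cyl l z n) / exp (- real n * P + birkhoff g n z) \<and>
         measure M (cyl l z n) / exp (- real n * P + birkhoff g n z) < C0"
    unfolding inv_gibbs_def by blast
  have "gibbs_bd l g M P C0"
    unfolding gibbs_bd_def
  proof (intro conjI ballI allI C0)
    fix z n assume "z \<in> fullshift l"
    then have 1: "1 / C0 < measure M (cyl l z n) / exp (- real n * P + birkhoff g n z)"
      and 2: "measure M (cyl l z n) / exp (- real n * P + birkhoff g n z) < C0" using b by auto
    have e: "exp (- real n * P + birkhoff g n z) > 0" by simp
    from 2 show "measure M (cyl l z n) < C0 * exp (- real n * P + birkhoff g n z)"
      using e by (simp add: divide_less_eq)
    from 1 have "1 < C0 * (measure M (cyl l z n) / exp (- real n * P + birkhoff g n z))"
      using C0 by (simp add: divide_less_eq mult.commute)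
    then show "exp (- real n * P + birkhoff g n z) < C0 * measure M (cyl l z n)"
      using e by (simp add: less_divide_eq)
  qed
  then show "\<exists>P C. gibbs_bd l g M P C" by blast
qed

lemma inv_pow:
  assumes "inv_gibbs l g M"
  shows "(shift ^^ n) \<in> measurable M M" "distr M M (shift ^^ n) = M"
proof -
  have s: "sets M = sets (shift_borel l)" using inv_gibbs_D[OF assms] by auto
  show m: "(shift ^^ n) \<in> measurable M M" for n
    using shift_pow_meas[of n l] measurable_cong_sets[OF s s] by simp
  show "distr M M (shift ^^ n) = M"
  proof (induction n)
    case 0 then show ?case by (simp add: distr_id2 [of M] id_def) 
  next
    case (Suc n)
    have "distr M M (shift ^^ Suc n) = distr M M (shift \<circ> (shift ^^ n))" by simp
    also have "\<dots> = distr (distr M M (shift ^^ n)) M shift"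
      using distr_distr[OF inv_gibbs_D(4)[OF assms] m] by simp
    also have "\<dots> = M" using Suc inv_gibbs_D(5)[OF assms] by simp
    finally show ?case .
  qed
qed

lemma measure_pre:
  assumes "inv_gibbs l g M" "A \<in> sets M"
  shows "measure M ((shift ^^ n) -` A \<inter> fullshift l) = measure M A"
proof -
  have "measure M A = measure (distr M M (shift ^^ n)) A" using inv_pow(2)[OF assms(1)] by simp
  also have "\<dots> = measure M ((shift ^^ n) -` A \<inter> space M)"
    by (rule measure_distr[OF inv_pow(1)[OF assms(1)] assms(2)])
  finally show ?thesis using inv_gibbs_D(3)[OF assms(1)] by simp
qed

lemma sum_meas:
  assumes fm: "finite_measure N" and s: "sets N = sets (shift_borel l)" and A: "A \<in> alg l n"
  shows "measure N A = (\<Sum>c\<in>{c\<in>LC l n. c \<subseteq> A}. measure N c)"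
proof -
  have "measure N (fullshift l \<inter> id -` A) = (\<Sum>c\<in>{c\<in>LC l n. c \<subseteq> A}. measure N (fullshift l \<inter> id -` c))"
  proof (rule measure_decomp[OF fm A])
    fix c assume "c \<in> LC l n"
    then have "c \<in> sets N" "c \<subseteq> fullshift l" using LC_sets s by (auto simp: LC_def cyl_def)
    then show "fullshift l \<inter> id -` c \<in> sets N" by (simp add: Int_absorb1)
  qed
  moreover have "fullshift l \<inter> id -` A = A" using A by (auto simp: alg_def)
  moreover have "fullshift l \<inter> id -` c = c" if "c \<in> LC l n" for c
    using that by (auto simp: LC_def cyl_def)
  ultimately show ?thesis by simp
qed

lemma gibbs_fm: "inv_gibbs l g M \<Longrightarrow> finite_measure M"
  using inv_gibbs_D(1) prob_space_def by blast

lemma gibbs_one: "inv_gibbs l g M \<Longrightarrow> measure M (fullshift l) = 1"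
  using inv_gibbs_D(1,3) prob_space.prob_space by metis

lemma P_le:
  assumes M: "inv_gibbs l g M" and N: "inv_gibbs l g N"
    and bM: "gibbs_bd l g M P C" and bN: "gibbs_bd l g N P' C'"
  shows "P \<le> P'"
proof (rule ccontr)
  assume "\<not> P \<le> P'"
  then have d: "P - P' > 0" by simp
  have C: "C > 0" "C' > 0" using bM bN by (auto simp: gibbs_bd_def)
  define K where "K = C * C'"
  have K: "K > 0" using C by (simp add: K_def)
  have ineq: "1 \<le> K * exp (real n * (P' - P))" for n
  proof -
    have cmp: "measure M c \<le> K * exp (real n * (P' - P)) * measure N c" if cL: "c \<in> LC l n" for c
    proof -
      obtain z where z: "z \<in> fullshift l" "c = cyl l z n" using cL unfolding LC_def by blast
      define E where "E = - real n * P' + birkhoff g n z"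
      have eq: "exp (- real n * P + birkhoff g n z) = exp (real n * (P' - P)) * exp E"
        unfolding E_def by (simp add: mult_exp_exp algebra_simps)
      have 1: "measure M c < C * exp (- real n * P + birkhoff g n z)"
        using bM z unfolding gibbs_bd_def by auto
      have 2: "exp E < C' * measure N c"
        using bN z unfolding gibbs_bd_def E_def by auto
      have "measure M c < C * (exp (real n * (P' - P)) * exp E)" using 1 eq by simp
      also have "\<dots> \<le> C * (exp (real n * (P' - P)) * (C' * measure N c))"
        using 2 C by (intro mult_left_mono) auto
      finally show ?thesis by (simp add: K_def algebra_simps)
    qed
    have "1 = measure M (fullshift l)" using gibbs_one[OF M] by simp
    also have "\<dots> = (\<Sum>c\<in>{c\<in>LC l n. c \<subseteq> fullshift l}. measure M c)"
      using sum_meas[OF gibbs_fm[OF M] inv_gibbs_D(2)[OF M] alg_full] .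
    also have "\<dots> \<le> (\<Sum>c\<in>{c\<in>LC l n. c \<subseteq> fullshift l}. K * exp (real n * (P' - P)) * measure N c)"
      using cmp by (intro sum_mono) auto
    also have "\<dots> = K * exp (real n * (P' - P)) * measure N (fullshift l)"
      using sum_meas[OF gibbs_fm[OF N] inv_gibbs_D(2)[OF N] alg_full[of l n]] by (simp add: sum_distrib_left[symmetric])
    also have "\<dots> = K * exp (real n * (P' - P))" using gibbs_one[OF N] by simp
    finally show ?thesis .
  qed
  obtain n :: nat where n: "ln K / (P - P') < real n" using reals_Archimedean2 by blast
  then have "ln K < real n * (P - P')" using d by (simp add: divide_less_eq)
  moreover have "0 \<le> ln K + real n * (P' - P)"
  proof -
    have "ln 1 \<le> ln (K * exp (real n * (P' - P)))" using ineq[of n] K by (subst ln_le_cancel_iff) auto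
    then show ?thesis using K by (simp add: ln_mult)
  qed
  ultimately show False by (simp add: algebra_simps)
qed

lemma comp_all:
  assumes M: "inv_gibbs l g M" and N: "inv_gibbs l g N"
  shows "\<exists>K>0. \<forall>B\<in>sets (shift_borel l). measure M B \<le> K * measure N B"
proof -
  obtain P C where bM: "gibbs_bd l g M P C" using inv_gibbs_D(6)[OF M] by blast
  obtain P' C' where bN: "gibbs_bd l g N P' C'" using inv_gibbs_D(6)[OF N] by blast
  have PP: "P = P'" using P_le[OF M N bM bN] P_le[OF N M bN bM] by simp
  have C: "C > 0" "C' > 0" using bM bN by (auto simp: gibbs_bd_def)
  define K where "K = C * C'"
  have K: "K > 0" using C by (simp add: K_def)
  have cmp: "measure M c \<le> K * measure N c" if cL: "c \<in> LC l n" for c n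
  proof -
    obtain z where z: "z \<in> fullshift l" "c = cyl l z n" using cL unfolding LC_def by blast
    have 1: "measure M c < C * exp (- real n * P + birkhoff g n z)"
      using bM z unfolding gibbs_bd_def by auto
    have 2: "exp (- real n * P + birkhoff g n z) < C' * measure N c"
      using bN z PP unfolding gibbs_bd_def by auto
    have "measure M c < C * (C' * measure N c)" using 1 2 C
      by (meson less_trans mult_less_cancel_left_pos)
    then show ?thesis by (simp add: K_def)
  qed
  have calg: "measure M A \<le> K * measure N A" if "A \<in> alg l n" for A n
  proof -
    have "measure M A = (\<Sum>c\<in>{c\<in>LC l n. c \<subseteq> A}. measure M c)"
      using sum_meas[OF gibbs_fm[OF M] inv_gibbs_D(2)[OF M] that] .
    also have "\<dots> \<le> (\<Sum>c\<in>{c\<in>LC l n. c \<subseteq> A}. K * measure N c)"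
      using cmp by (intro sum_mono) auto
    also have "\<dots> = K * measure N A"
      using sum_meas[OF gibbs_fm[OF N] inv_gibbs_D(2)[OF N] that] by (simp add: sum_distrib_left)
    finally show ?thesis .
  qed
  have "measure M B \<le> K * measure N B" if B: "B \<in> sets (shift_borel l)" for B
  proof (rule field_le_epsilon)
    fix e :: real assume e: "e > 0"
    define d where "d = e / (K + 1)"
    have d: "d > 0" using e K by (simp add: d_def)
    obtain n A where A: "A \<in> alg l n" "measure M (sdiff A B) < d" "measure N (sdiff A B) < d"
      using approx[OF gibbs_fm[OF M] gibbs_fm[OF N] inv_gibbs_D(2)[OF M] inv_gibbs_D(2)[OF N] B] d by blast
    have As: "A \<in> sets (shift_borel l)" using alg_sets[OF A(1)] .
    have sd: "sdiff A B \<in> sets (shift_borel l)" using As B unfolding sdiff_def by auto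
    have sM: "sets M = sets (shift_borel l)" and sN: "sets N = sets (shift_borel l)"
      using inv_gibbs_D(2) M N by auto
    have "measure M B \<le> measure M (A \<union> sdiff A B)"
      using finite_measure.finite_measure_mono[OF gibbs_fm[OF M], of B "A \<union> sdiff A B"] As sd sM
      unfolding sdiff_def by auto
    also have "\<dots> \<le> measure M A + measure M (sdiff A B)"
      using measure_Un_le[of A M "sdiff A B"] As sd sM by auto
    finally have **: "measure M B \<le> measure M A + measure M (sdiff A B)" .
    have "measure N A \<le> measure N (B \<union> sdiff A B)"
      using finite_measure.finite_measure_mono[OF gibbs_fm[OF N], of A "B \<union> sdiff A B"] B sd sN
      unfolding sdiff_def by auto
    also have "\<dots> \<le> measure N B + measure N (sdiff A B)"
      using measure_Un_le[of B N "sdiff A B"] B sd sN by auto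
    finally have *: "measure N A \<le> measure N B + measure N (sdiff A B)" .
    have "measure M B \<le> K * measure N A + d" using calg[OF A(1)] A(2) ** by linarith
    also have "\<dots> \<le> K * (measure N B + d) + d"
      using * A(3) K by (intro add_right_mono mult_left_mono) auto
    also have "\<dots> = K * measure N B + (K + 1) * d" by (simp add: algebra_simps)
    also have "(K + 1) * d = e" unfolding d_def using K by simp
    finally show "measure M B \<le> K * measure N B + e" .
  qed
  then show ?thesis using K by blast
qed

lemma pre_sets: "X \<in> sets (shift_borel l) \<Longrightarrow> (shift ^^ n) -` X \<inter> fullshift l \<in> sets (shift_borel l)"
  using measurable_sets[OF shift_pow_meas[of n l]] space_sb by metis

lemma cyl_concat:
  fixes n p :: nat
  assumes x: "x \<in> fullshift l" and w: "w \<in> fullshift l"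
  defines "z \<equiv> (\<lambda>i. if i < n then x i else w (i - n))"
  shows "z \<in> fullshift l" "cyl l z n = cyl l x n" "(shift ^^ n) z = w"
    "cyl l x n \<inter> (shift ^^ n) -` (cyl l w p) = cyl l z (n + p)"
proof -
  show "z \<in> fullshift l" using x w by (auto simp: z_def fullshift_def)
  show "cyl l z n = cyl l x n" by (rule cyl_eqI) (simp add: z_def)
  show "(shift ^^ n) z = w" by (simp add: shift_pow z_def)
  show "cyl l x n \<inter> (shift ^^ n) -` (cyl l w p) = cyl l z (n + p)"
  proof (intro set_eqI iffI)
    fix y assume y: "y \<in> cyl l x n \<inter> (shift ^^ n) -` (cyl l w p)"
    then have y1: "y \<in> fullshift l" "\<forall>i<n. y i = x i" "\<forall>i<p. y (i + n) = w i"
      by (auto simp: cyl_def shift_pow)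
    have "y i = z i" if "i < n + p" for i
    proof (cases "i < n")
      case True then show ?thesis using y1 by (simp add: z_def)
    next
      case False
      then have "i - n < p" "i = (i - n) + n" using that by auto
      then show ?thesis using y1(3) False by (metis z_def)
    qed
    then show "y \<in> cyl l z (n + p)" using y1 by (simp add: cyl_def)
  next
    fix y assume y: "y \<in> cyl l z (n + p)"
    then have y1: "y \<in> fullshift l" "\<forall>i<n+p. y i = z i" by (auto simp: cyl_def)
    have "y i = x i" if "i < n" for i using y1(2) that by (simp add: z_def)
    moreover have "y (i + n) = w i" if "i < p" for i using y1(2) that
      by (metis add.commute add_diff_cancel_left' add_less_cancel_left not_add_less2 z_def)
    ultimately show "y \<in> cyl l x n \<inter> (shift ^^ n) -` (cyl l w p)"
      using y1(1) shift_pow_fullshift[OF y1(1), of n] by (simp add: cyl_def shift_pow)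
  qed
qed

lemma point_prod:
  assumes b: "gibbs_bd l g M P C" and z: "z \<in> fullshift l"
  shows "measure M (cyl l z n) * measure M (cyl l ((shift ^^ n) z) p) \<le> C^3 * measure M (cyl l z (n + p))"
proof -
  have C: "C > 0" using b by (simp add: gibbs_bd_def)
  define a where "a = exp (- real n * P + birkhoff g n z)"
  define bb where "bb = exp (- real p * P + birkhoff g p ((shift ^^ n) z))"
  have ab: "exp (- real (n + p) * P + birkhoff g (n + p) z) = a * bb"
    unfolding a_def bb_def birkhoff_add by (simp add: mult_exp_exp algebra_simps)
  have z': "(shift ^^ n) z \<in> fullshift l" using shift_pow_fullshift[OF z] .
  have 1: "measure M (cyl l z n) \<le> C * a" using b z unfolding gibbs_bd_def a_def by (auto intro: less_imp_le)
  have 2: "measure M (cyl l ((shift ^^ n) z) p) \<le> C * bb" using b z' unfolding gibbs_bd_def bb_def by (auto intro: less_imp_le)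
  have 3: "a * bb \<le> C * measure M (cyl l z (n + p))" using b z ab unfolding gibbs_bd_def by (metis less_imp_le)
  have "measure M (cyl l z n) * measure M (cyl l ((shift ^^ n) z) p) \<le> (C * a) * (C * bb)"
    using 1 2 by (intro mult_mono) (auto simp: a_def C less_imp_le)
  also have "\<dots> = C^2 * (a * bb)" by (simp add: power2_eq_square algebra_simps)
  also have "\<dots> \<le> C^2 * (C * measure M (cyl l z (n + p)))" using 3 by (intro mult_left_mono) auto
  also have "\<dots> = C^3 * measure M (cyl l z (n + p))" by (simp add: power3_eq_cube power2_eq_square)
  finally show ?thesis .
qed

lemma set_prod:
  assumes M: "inv_gibbs l g M" and b: "gibbs_bd l g M P C"
    and A: "A \<in> alg l n" and B: "B \<in> alg l p"
  shows "measure M A * measure M B \<le> C^3 * measure M (A \<inter> (shift ^^ n) -` B)"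
proof -
  have fm: "finite_measure M" using gibbs_fm[OF M] .
  have sM: "sets M = sets (shift_borel l)" using inv_gibbs_D(2)[OF M] .
  have C: "C > 0" using b by (simp add: gibbs_bd_def)
  let ?SA = "{c\<in>LC l n. c \<subseteq> A}" and ?SB = "{c\<in>LC l p. c \<subseteq> B}"
  have Bs: "B \<in> sets (shift_borel l)" using alg_sets[OF B] .
  have csub: "c \<subseteq> fullshift l" if "c \<in> LC l m" for c m using that by (auto simp: LC_def cyl_def)
  have mes: "X \<inter> (shift ^^ n) -` Y \<in> sets M" if "X \<in> sets (shift_borel l)" "X \<subseteq> fullshift l" "Y \<in> sets (shift_borel l)" for X Y
  proof -
    have "X \<inter> (shift ^^ n) -` Y = X \<inter> ((shift ^^ n) -` Y \<inter> fullshift l)" using that(2) by blast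
    then show ?thesis using that pre_sets[OF that(3), of n] sM by auto
  qed
  have cprod: "measure M a * measure M bb \<le> C^3 * measure M (a \<inter> (shift ^^ n) -` bb)"
    if a: "a \<in> LC l n" and bL: "bb \<in> LC l p" for a bb
  proof -
    obtain x where x: "x \<in> fullshift l" "a = cyl l x n" using a unfolding LC_def by blast
    obtain w where w: "w \<in> fullshift l" "bb = cyl l w p" using bL unfolding LC_def by blast
    note cc = cyl_concat[OF x(1) w(1), where n=n]
    show ?thesis using point_prod[OF b cc(1), of n p] cc x w by simp
  qed
  have e1: "measure M (A \<inter> (shift ^^ n) -` B) = (\<Sum>a\<in>?SA. measure M (a \<inter> (shift ^^ n) -` B))"
  proof -
    have "measure M ((shift ^^ n) -` B \<inter> id -` A) = (\<Sum>a\<in>?SA. measure M ((shift ^^ n) -` B \<inter> id -` a))"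
    proof (rule measure_decomp[OF fm A])
      fix c assume "c \<in> LC l n"
      then show "(shift ^^ n) -` B \<inter> id -` c \<in> sets M"
        using mes[of c B] LC_sets csub Bs by (simp add: Int_commute)
    qed
    then show ?thesis by (simp add: Int_commute)
  qed
  have e2: "measure M (a \<inter> (shift ^^ n) -` B) = (\<Sum>bb\<in>?SB. measure M (a \<inter> (shift ^^ n) -` bb))"
    if "a \<in> LC l n" for a
  proof (rule measure_decomp[OF fm B])
    fix c assume "c \<in> LC l p"
    then show "a \<inter> (shift ^^ n) -` c \<in> sets M"
      using mes[of a c] LC_sets csub that by simp
  qed
  have "measure M A * measure M B = (\<Sum>a\<in>?SA. measure M a) * (\<Sum>bb\<in>?SB. measure M bb)"
    using sum_meas[OF fm sM A] sum_meas[OF fm sM B] by simp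
  also have "\<dots> = (\<Sum>a\<in>?SA. \<Sum>bb\<in>?SB. measure M a * measure M bb)"
    by (simp add: sum_product)
  also have "\<dots> \<le> (\<Sum>a\<in>?SA. \<Sum>bb\<in>?SB. C^3 * measure M (a \<inter> (shift ^^ n) -` bb))"
    using cprod by (intro sum_mono) auto
  also have "\<dots> = C^3 * (\<Sum>a\<in>?SA. \<Sum>bb\<in>?SB. measure M (a \<inter> (shift ^^ n) -` bb))"
    by (simp add: sum_distrib_left)
  also have "\<dots> = C^3 * measure M (A \<inter> (shift ^^ n) -` B)"
    using e1 e2 by simp
  finally show ?thesis .
qed

lemma ergodic:
  assumes M: "inv_gibbs l g M" and S: "S \<in> sets (shift_borel l)"
    and inv: "\<And>n. measure M (S - (shift ^^ n) -` S) = 0"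
  shows "measure M S = 0 \<or> measure M S = 1"
proof (rule ccontr)
  assume ne: "\<not> (measure M S = 0 \<or> measure M S = 1)"
  have fm: "finite_measure M" using gibbs_fm[OF M] .
  have sM: "sets M = sets (shift_borel l)" using inv_gibbs_D(2)[OF M] .
  obtain P C where b: "gibbs_bd l g M P C" using inv_gibbs_D(6)[OF M] by blast
  have C: "C > 0" using b by (simp add: gibbs_bd_def)
  define c3 where "c3 = C^3"
  have c3: "c3 > 0" using C by (simp add: c3_def)
  have Ssub: "S \<subseteq> fullshift l" using S sets.sets_into_space space_sb by metis
  have SM: "S \<in> sets M" using S sM by simp
  define s where "s = measure M S"
  define t where "t = 1 - s"
  have s01: "s \<le> 1" unfolding s_def using finite_measure.finite_measure_mono[OF fm Ssub] sM sets.top[of "shift_borel l"] gibbs_one[OF M] space_sb by metis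
  have s0: "s > 0" "t > 0" using ne s01 measure_nonneg[of M S] unfolding s_def t_def by linarith+
  define e where "e = min (s/2) (min (t/2) (s*t/(4*c3)))"
  have e: "e > 0" "e \<le> s/2" "e \<le> t/2" "c3 * e \<le> s*t/4"
    using s0 c3 unfolding e_def by (auto simp: field_simps min_def)
  obtain n A where A: "A \<in> alg l n" "measure M (sdiff A S) < e"
    using approx[OF fm fm sM sM S] e(1) by blast
  have As: "A \<in> sets M" using alg_sets[OF A(1)] sM by simp
  have Asub: "A \<subseteq> fullshift l" using A(1) by (simp add: alg_def)
  define A' where "A' = fullshift l - A"
  have A'alg: "A' \<in> alg l n" unfolding A'_def using alg_compl[OF A(1)] .
  have Om: "fullshift l \<in> sets M" using sets.top[of M] inv_gibbs_D(3)[OF M] by simp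
  have mA': "measure M A' = 1 - measure M A"
    unfolding A'_def using finite_measure.finite_measure_Diff[OF fm Om As Asub] gibbs_one[OF M] by simp
  have sdm: "measure M (A - S) + measure M (S - A) = measure M (sdiff A S)"
  proof -
    have d: "(A - S) \<inter> (S - A) = {}" by blast
    have "A - S \<in> sets M" "S - A \<in> sets M" using As SM by auto
    from finite_measure.finite_measure_Union[OF fm this d] show ?thesis unfolding sdiff_def by simp
  qed
  have AS: "measure M (A - S) \<ge> 0" "measure M (S - A) \<ge> 0" by auto
  have lowA: "measure M A \<ge> s - e"
  proof -
    have "s \<le> measure M (A \<union> (S - A))"
      unfolding s_def using finite_measure.finite_measure_mono[OF fm, of S "A \<union> (S - A)"] As SM by auto
    also have "\<dots> \<le> measure M A + measure M (S - A)" using measure_Un_le[of A M "S - A"] As SM by auto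
    finally show ?thesis using sdm AS A(2) by linarith
  qed
  have upA: "measure M A \<le> s + e"
  proof -
    have "measure M A \<le> measure M (S \<union> (A - S))"
      using finite_measure.finite_measure_mono[OF fm, of A "S \<union> (A - S)"] As SM by auto
    also have "\<dots> \<le> measure M S + measure M (A - S)" using measure_Un_le[of S M "A - S"] As SM by auto
    finally show ?thesis using sdm AS A(2) unfolding s_def by linarith
  qed
  have lowA': "measure M A' \<ge> t - e" using upA mA' unfolding t_def by linarith
  have prod_low: "s * t / 4 \<le> measure M A * measure M A'"
  proof -
    have "(s/2) * (t/2) \<le> measure M A * measure M A'"
      using lowA lowA' e s0 by (intro mult_mono) auto
    then show ?thesis by simp
  qed
  have prod_up: "measure M A * measure M A' \<le> c3 * measure M (A \<inter> (shift ^^ n) -` A')"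
    using set_prod[OF M b A(1) A'alg] unfolding c3_def .
  define X3 where "X3 = (shift ^^ n) -` (S - A) \<inter> fullshift l"
  have X3s: "X3 \<in> sets M" unfolding X3_def using pre_sets[of "S - A" l n] As SM sM by auto
  have X3m: "measure M X3 = measure M (S - A)"
    unfolding X3_def using measure_pre[OF M, of "S - A" n] As SM by auto
  define X2 where "X2 = S - (shift ^^ n) -` S"
  have X2eq: "X2 = S - ((shift ^^ n) -` S \<inter> fullshift l)" unfolding X2_def using Ssub by blast
  have X2s: "X2 \<in> sets M" unfolding X2eq using pre_sets[of S l n] S sM by auto
  have incl: "A \<inter> (shift ^^ n) -` A' \<subseteq> (A - S) \<union> X2 \<union> X3"
    unfolding X2_def X3_def A'_def using Asub by auto
  have "measure M (A \<inter> (shift ^^ n) -` A') \<le> measure M ((A - S) \<union> X2 \<union> X3)"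
    using finite_measure.finite_measure_mono[OF fm incl] As SM X2s X3s by auto
  also have "\<dots> \<le> measure M ((A - S) \<union> X2) + measure M X3"
    using measure_Un_le[of "(A - S) \<union> X2" M X3] As SM X2s X3s by auto
  also have "\<dots> \<le> measure M (A - S) + measure M X2 + measure M X3"
    using measure_Un_le[of "A - S" M X2] As SM X2s by auto
  also have "\<dots> = measure M (sdiff A S)" using sdm X3m inv[of n] unfolding X2_def by simp
  finally have "measure M (A \<inter> (shift ^^ n) -` A') < e" using A(2) by linarith
  then have "c3 * measure M (A \<inter> (shift ^^ n) -` A') < c3 * e" using c3 by simp
  then show False using prod_low prod_up e(4) by linarith
qed

lemma L2:
  fixes N :: "'a measure"
  assumes N: "prob_space N" and T: "T \<in> measurable N N" and TN: "distr N N T = N"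
    and h: "h \<in> borel_measurable N" and hb: "\<And>x. 0 \<le> h x" "\<And>x. h x \<le> B"
    and MT: "distr (density N (\<lambda>x. ennreal (h x))) (density N (\<lambda>x. ennreal (h x))) T = density N (\<lambda>x. ennreal (h x))"
  shows "AE x in N. h (T x) = h x"
proof -
  interpret N: prob_space N by fact
  define M where "M = density N (\<lambda>x. ennreal (h x))"
  have sM: "sets M = sets N" unfolding M_def by simp
  have TM: "T \<in> measurable M M" using T measurable_cong_sets[OF sM sM] by simp
  have hM: "h \<in> borel_measurable M" using h by (simp add: M_def)
  have hT: "(\<lambda>x. h (T x)) \<in> borel_measurable N" using measurable_comp[OF T h] by (simp add: comp_def)
  have bnd: "integrable N f" if "f \<in> borel_measurable N" "\<And>x. \<bar>f x\<bar> \<le> B'" for f :: "'a \<Rightarrow> real" and B'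
    using N.integrable_const_bound[of f B'] that by auto
  have hB: "\<bar>h x\<bar> \<le> B" for x using hb[of x] by simp
  have B0: "0 \<le> B" using hb(1)[of undefined] hb(2)[of undefined] by linarith
  have i1: "integrable N (\<lambda>x. h (T x) ^ 2)"
    by (rule bnd[of _ "B^2"]) (use hT in simp, use hb in \<open>auto intro!: power_mono simp: abs_le_iff\<close>)
  have i2: "integrable N (\<lambda>x. h x * h (T x))"
    by (rule bnd[of _ "B*B"]) (use hT h in simp, use hb B0 in \<open>auto intro!: mult_mono simp: abs_mult\<close>)
  have i3: "integrable N (\<lambda>x. h x ^ 2)"
    by (rule bnd[of _ "B^2"]) (use h in simp, use hb in \<open>auto intro!: power_mono simp: abs_le_iff\<close>)
  have E1: "(\<integral>x. h (T x) ^ 2 \<partial>N) = (\<integral>x. h x ^ 2 \<partial>N)"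
  proof -
    have "(\<integral>x. h x ^ 2 \<partial>distr N N T) = (\<integral>x. h (T x) ^ 2 \<partial>N)"
      by (rule integral_distr[OF T]) (use h in simp)
    then show ?thesis using TN by simp
  qed
  have E2: "(\<integral>x. h x * h (T x) \<partial>N) = (\<integral>x. h x ^ 2 \<partial>N)"
  proof -
    have "(\<integral>x. h (T x) \<partial>M) = (\<integral>x. h x * h (T x) \<partial>N)"
      unfolding M_def by (subst integral_density) (use h hT hb in auto)
    moreover have "(\<integral>x. h x \<partial>M) = (\<integral>x. h x * h x \<partial>N)"
      unfolding M_def by (subst integral_density) (use h hb in auto)
    moreover have "(\<integral>x. h x \<partial>distr M M T) = (\<integral>x. h (T x) \<partial>M)"
      by (rule integral_distr[OF TM hM])
    moreover have "distr M M T = M" using MT unfolding M_def .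
    ultimately show ?thesis by (simp add: power2_eq_square)
  qed
  have "(\<integral>x. (h (T x) - h x) ^ 2 \<partial>N) = (\<integral>x. h (T x) ^ 2 - 2 * (h x * h (T x)) + h x ^ 2 \<partial>N)"
    by (rule Bochner_Integration.integral_cong) (auto simp: power2_eq_square algebra_simps)
  also have "\<dots> = (\<integral>x. h (T x) ^ 2 \<partial>N) - 2 * (\<integral>x. h x * h (T x) \<partial>N) + (\<integral>x. h x ^ 2 \<partial>N)"
    using i1 i2 i3 by simp
  also have "\<dots> = 0" using E1 E2 by simp
  finally have z: "(\<integral>x. (h (T x) - h x) ^ 2 \<partial>N) = 0" .
  have iz: "integrable N (\<lambda>x. (h (T x) - h x) ^ 2)"
  proof -
    have "integrable N (\<lambda>x. h (T x) ^ 2 - 2 * (h x * h (T x)) + h x ^ 2)" using i1 i2 i3 by simp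
    moreover have "(\<lambda>x. h (T x) ^ 2 - 2 * (h x * h (T x)) + h x ^ 2) = (\<lambda>x. (h (T x) - h x) ^ 2)"
      by (auto simp: power2_eq_square algebra_simps)
    ultimately show ?thesis by simp
  qed
  have "AE x in N. (h (T x) - h x) ^ 2 = 0"
    using integral_nonneg_eq_0_iff_AE[OF iz] z by simp
  then show ?thesis by auto
qed

lemma gibbs_unique:
  assumes M: "inv_gibbs l g M" and N: "inv_gibbs l g N"
  shows "M = N"
proof -
  interpret N: prob_space N using inv_gibbs_D(1)[OF N] .
  interpret M: prob_space M using inv_gibbs_D(1)[OF M] .
  have sM: "sets M = sets (shift_borel l)" and sN: "sets N = sets (shift_borel l)"
    using inv_gibbs_D(2) M N by auto
  have spN: "space N = fullshift l" using inv_gibbs_D(3)[OF N] .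
  obtain K where K: "K > 0" "\<And>B. B \<in> sets (shift_borel l) \<Longrightarrow> measure M B \<le> K * measure N B"
    using comp_all[OF M N] by blast
  have ac: "absolutely_continuous N M"
    unfolding absolutely_continuous_def
  proof
    fix B assume B: "B \<in> null_sets N"
    then have Bs: "B \<in> sets (shift_borel l)" "measure N B = 0" using sN by (auto simp: measure_def)
    then have "measure M B \<le> 0" using K(2)[of B] by simp
    then have "measure M B = 0" using measure_nonneg[of M B] by linarith
    then show "B \<in> null_sets M" using Bs sM M.emeasure_eq_measure by auto
  qed
  have sMN: "sets M = sets N" using sM sN by simp
  define D where "D = RN_deriv N M"
  have MD: "density N D = M" unfolding D_def using N.density_RN_deriv[OF ac sMN] .
  have Dm: "D \<in> borel_measurable N" unfolding D_def by simp
  have Dfin: "AE x in N. D x \<noteq> \<infinity>"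
    unfolding D_def using N.RN_deriv_finite[OF prob_space_imp_sigma_finite[OF inv_gibbs_D(1)[OF M]] ac sMN] .
  define B where "B = {x \<in> space N. ennreal (K + 1) < D x}"
  have Bs: "B \<in> sets N" unfolding B_def using Dm by measurable
  have Bnull: "emeasure N B = 0"
  proof -
    have "ennreal (K + 1) * emeasure N B = (\<integral>\<^sup>+ x. ennreal (K + 1) * indicator B x \<partial>N)"
      using nn_integral_cmult_indicator[OF Bs] by simp
    also have "\<dots> \<le> (\<integral>\<^sup>+ x. D x * indicator B x \<partial>N)"
      by (intro nn_integral_mono) (auto simp: B_def indicator_def less_imp_le)
    also have "\<dots> = emeasure M B"
      using emeasure_density[OF Dm Bs] MD by (simp add: mult.commute)
    also have "\<dots> = ennreal (measure M B)" using M.emeasure_eq_measure by simp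
    also have "\<dots> \<le> ennreal (K * measure N B)" using K(2)[of B] Bs sN by (simp add: ennreal_leI)
    finally have "ennreal ((K + 1) * measure N B) \<le> ennreal (K * measure N B)"
      using N.emeasure_eq_measure K by (simp add: ennreal_mult)
    then have "(K + 1) * measure N B \<le> K * measure N B"
      using K measure_nonneg[of N B] by (subst (asm) ennreal_le_iff) auto
    then have "measure N B \<le> 0" by (simp add: algebra_simps)
    then have "measure N B = 0" using measure_nonneg[of N B] by linarith
    then show ?thesis using N.emeasure_eq_measure by simp
  qed
  have Dle: "AE x in N. D x \<le> ennreal (K + 1)"
  proof (rule AE_I'[of B])
    show "B \<in> null_sets N" using Bs Bnull by auto
    show "{x \<in> space N. \<not> D x \<le> ennreal (K + 1)} \<subseteq> B" unfolding B_def by (auto simp: not_le)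
  qed
  define h where "h x = min (enn2real (D x)) (K + 1)" for x
  have hm: "h \<in> borel_measurable N" unfolding h_def using Dm by measurable
  have hb: "\<And>x. 0 \<le> h x" "\<And>x. h x \<le> K + 1" unfolding h_def using K by auto
  have Dh: "AE x in N. D x = ennreal (h x)"
    using Dfin Dle
  proof eventually_elim
    case (elim x)
    then have lt: "D x < top" by (simp add: top.not_eq_extremum)
    have "enn2real (D x) \<le> enn2real (ennreal (K + 1))"
      by (rule enn2real_mono[OF elim(2)]) simp
    moreover have "enn2real (ennreal (K + 1)) = K + 1" using K by (intro enn2real_ennreal) simp
    ultimately have "enn2real (D x) \<le> K + 1" by linarith
    then have "h x = enn2real (D x)" unfolding h_def by simp
    then show ?case using lt by simp
  qed
  have Mh: "M = density N (\<lambda>x. ennreal (h x))"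
    using MD density_cong[OF Dm _ Dh] hm by auto
  have hinv: "AE x in N. h ((shift ^^ n) x) = h x" for n
  proof (rule L2[OF inv_gibbs_D(1)[OF N] inv_pow(1)[OF N] inv_pow(2)[OF N] hm hb])
    show "distr (density N (\<lambda>x. ennreal (h x))) (density N (\<lambda>x. ennreal (h x))) (shift ^^ n) = density N (\<lambda>x. ennreal (h x))"
      using inv_pow(2)[OF M, of n] Mh by simp
  qed
  have levinv: "measure N (S - (shift ^^ n) -` S) = 0" if S: "S = {x \<in> fullshift l. Q (h x)}" and Ss': "S \<in> sets N" for S Q n
  proof -
    define Z where "Z = {x \<in> space N. \<not> h ((shift ^^ n) x) = h x}"
    have hT: "(\<lambda>x. h ((shift ^^ n) x)) \<in> borel_measurable N"
      using measurable_comp[OF inv_pow(1)[OF N, of n] hm] by (simp add: comp_def)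
    have Zs: "Z \<in> sets N" unfolding Z_def using borel_measurable_neq[OF hT hm] by simp
    have "emeasure N Z = 0" using AE_iff_measurable[OF Zs] hinv[of n] Z_def by simp
    then have Z0: "measure N Z = 0" by (simp add: measure_def)
    have sub: "S - (shift ^^ n) -` S \<subseteq> Z" unfolding S Z_def spN using shift_pow_fullshift[of _ l n] by auto
    have Ss: "S - (shift ^^ n) -` S \<in> sets N"
    proof -
      have "S - (shift ^^ n) -` S = S - ((shift ^^ n) -` S \<inter> space N)" unfolding S spN by auto
      then show ?thesis using Ss' measurable_sets[OF inv_pow(1)[OF N, of n] Ss'] by auto
    qed
    show ?thesis using N.finite_measure_mono[OF sub Zs] Z0 measure_nonneg[of N "S - (shift ^^ n) -` S"] by linarith
  qed
  define S1 where "S1 = {x \<in> fullshift l. 1 < h x}"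
  define S2 where "S2 = {x \<in> fullshift l. h x < 1}"
  note [measurable] = hm
  have S1s: "S1 \<in> sets N"
  proof -
    have "S1 = {x \<in> space N. 1 < h x}" unfolding S1_def spN ..
    also have "\<dots> \<in> sets N" by measurable
    finally show ?thesis .
  qed
  have S2s: "S2 \<in> sets N"
  proof -
    have "S2 = {x \<in> space N. h x < 1}" unfolding S2_def spN ..
    also have "\<dots> \<in> sets N" by measurable
    finally show ?thesis .
  qed
  have S1e: "measure N S1 = 0 \<or> measure N S1 = 1"
    using ergodic[OF N, of S1] S1s sN levinv[OF S1_def S1s] by auto
  have S2e: "measure N S2 = 0 \<or> measure N S2 = 1"
    using ergodic[OF N, of S2] S2s sN levinv[OF S2_def S2s] by auto
  have int1: "(\<integral>x. h x \<partial>N) = 1"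
  proof -
    have "(\<integral>x. (1::real) \<partial>M) = (\<integral>x. h x *\<^sub>R 1 \<partial>N)" unfolding Mh by (subst integral_density) (use hm hb in auto)
    then show ?thesis using M.prob_space by simp
  qed
  have ih: "integrable N h" using N.integrable_const_bound[of h "K+1"] hm hb by (auto intro!: abs_le_iff[THEN iffD2])
  have full_AE: "AE x in N. x \<in> S" if "S \<in> sets N" "measure N S = 1" for S
  proof -
    have "measure N (space N - S) = 0" using N.prob_compl[OF that(1)] that(2) by simp
    then have "emeasure N (space N - S) = 0" using N.emeasure_eq_measure by simp
    then show ?thesis using AE_iff_measurable[of "space N - S" N "\<lambda>x. x \<in> S"] that(1) by auto
  qed
  have null_AE: "AE x in N. x \<notin> S" if "S \<in> sets N" "measure N S = 0" for S
    using AE_iff_measurable[of S N "\<lambda>x. x \<notin> S"] that N.emeasure_eq_measure sets.sets_into_space[OF that(1)] by auto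
  have S1z: "measure N S1 = 0"
  proof (rule ccontr)
    assume "measure N S1 \<noteq> 0"
    then have "AE x in N. x \<in> S1" using S1e full_AE S1s by auto
    then have gt: "AE x in N. 1 < h x" unfolding S1_def by auto
    have i: "integrable N (\<lambda>x. h x - 1)" using ih by simp
    have "(\<integral>x. h x - 1 \<partial>N) = 0" using int1 ih N.prob_space by (simp add: Bochner_Integration.integral_diff)
    moreover have nn: "AE x in N. 0 \<le> h x - 1" using gt by eventually_elim auto
    ultimately have "AE x in N. h x - 1 = 0" using integral_nonneg_eq_0_iff_AE[OF i nn] by simp
    with gt have "AE x in N. False" by eventually_elim auto
    then show False by simp
  qed
  have S2z: "measure N S2 = 0"
  proof (rule ccontr)
    assume "measure N S2 \<noteq> 0"
    then have "AE x in N. x \<in> S2" using S2e full_AE S2s by auto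
    then have lt: "AE x in N. h x < 1" unfolding S2_def by auto
    have i: "integrable N (\<lambda>x. 1 - h x)" using ih by simp
    have "(\<integral>x. 1 - h x \<partial>N) = 0" using int1 ih N.prob_space by (simp add: Bochner_Integration.integral_diff)
    moreover have nn: "AE x in N. 0 \<le> 1 - h x" using lt by eventually_elim auto
    ultimately have "AE x in N. 1 - h x = 0" using integral_nonneg_eq_0_iff_AE[OF i nn] by simp
    with lt have "AE x in N. False" by eventually_elim auto
    then show False by simp
  qed
  have "AE x in N. x \<notin> S1" "AE x in N. x \<notin> S2" "AE x in N. x \<in> space N" using null_AE S1s S2s S1z S2z by auto
  then have h1: "AE x in N. h x = 1"
  proof (eventually_elim)
    case (elim x) then show ?case by (auto simp: S1_def S2_def spN)
  qed
  have "M = density N (\<lambda>x. ennreal (h x))" by (rule Mh)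
  also have "\<dots> = density N (\<lambda>_. 1)"
    by (rule density_cong) (use hm h1 in auto)
  also have "\<dots> = N" by (rule density_1)
  finally show ?thesis .
qed

definition Nc :: "nat \<Rightarrow> (nat \<Rightarrow> nat) \<Rightarrow> nat \<Rightarrow> nat" where
  "Nc k \<phi> j = card {a\<in>{1..k}. \<phi> a = j}"

definition psi :: "nat \<Rightarrow> (nat \<Rightarrow> nat) \<Rightarrow> nat \<Rightarrow> nat" where
  "psi k \<phi> j = (SOME a. a \<in> {1..k} \<and> \<phi> a = j)"

definition sec :: "nat \<Rightarrow> (nat \<Rightarrow> nat) \<Rightarrow> (nat \<Rightarrow> nat) \<Rightarrow> (nat \<Rightarrow> nat)" where
  "sec k \<phi> y = (\<lambda>i. psi k \<phi> (y i))"

definition gfun :: "nat \<Rightarrow> ((nat \<Rightarrow> nat) \<Rightarrow> real) \<Rightarrow> (nat \<Rightarrow> nat) \<Rightarrow> (nat \<Rightarrow> nat) \<Rightarrow> real" where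
  "gfun k f \<phi> y = f (sec k \<phi> y) + ln (real (Nc k \<phi> (y 0)))"

context
  fixes k l :: nat and \<pi> :: "(nat \<Rightarrow> nat) \<Rightarrow> (nat \<Rightarrow> nat)" and \<phi> :: "nat \<Rightarrow> nat"
  assumes fac: "one_block_factor k l \<pi>"
    and phi: "\<And>x i. x \<in> fullshift k \<Longrightarrow> \<pi> x i = \<phi> (x i)"
begin

lemma surj_pi: "\<pi> ` fullshift k = fullshift l"
  using fac by (simp add: one_block_factor_def)

lemma phi_surj: assumes "j \<in> {1..l}" shows "\<exists>a\<in>{1..k}. \<phi> a = j"
proof -
  have "(\<lambda>_. j) \<in> fullshift l" using assms by (simp add: fullshift_def)
  then obtain x where x: "x \<in> fullshift k" "\<pi> x = (\<lambda>_. j)" using surj_pi by (metis imageE)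
  then have "\<phi> (x 0) = j" using phi[OF x(1), of 0] by simp
  moreover have "x 0 \<in> {1..k}" using x(1) by (simp add: fullshift_def)
  ultimately show ?thesis by blast
qed

lemma psi_prop: assumes "j \<in> {1..l}" shows "psi k \<phi> j \<in> {1..k}" "\<phi> (psi k \<phi> j) = j"
proof -
  have "\<exists>a. a \<in> {1..k} \<and> \<phi> a = j" using phi_surj[OF assms] by blast
  then have "psi k \<phi> j \<in> {1..k} \<and> \<phi> (psi k \<phi> j) = j" unfolding psi_def by (rule someI_ex)
  then show "psi k \<phi> j \<in> {1..k}" "\<phi> (psi k \<phi> j) = j" by auto
qed

lemma Nc_pos: assumes "j \<in> {1..l}" shows "Nc k \<phi> j \<ge> 1"
proof -
  have "psi k \<phi> j \<in> {a\<in>{1..k}. \<phi> a = j}" using psi_prop[OF assms] by simp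
  then have "{a\<in>{1..k}. \<phi> a = j} \<noteq> {}" by blast
  then show ?thesis unfolding Nc_def by (simp add: Suc_le_eq card_gt_0_iff)
qed

lemma sec_full: "y \<in> fullshift l \<Longrightarrow> sec k \<phi> y \<in> fullshift k"
  using psi_prop(1) by (auto simp: sec_def fullshift_def)

lemma pi_sec: "y \<in> fullshift l \<Longrightarrow> \<pi> (sec k \<phi> y) = y"
  using phi[OF sec_full] psi_prop(2) by (auto simp: sec_def fullshift_def)

lemma shift_sec: "(shift ^^ i) (sec k \<phi> y) = sec k \<phi> ((shift ^^ i) y)"
  by (simp add: shift_pow sec_def)

lemma pi_full: "x \<in> fullshift k \<Longrightarrow> \<pi> x \<in> fullshift l"
  using surj_pi by blast

lemma pc_iff:
  assumes x: "x \<in> fullshift k"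
  shows "\<pi> ` cyl k x n \<subseteq> cyl l y n \<longleftrightarrow> (\<forall>i<n. \<phi> (x i) = y i)"
proof
  assume "\<pi> ` cyl k x n \<subseteq> cyl l y n"
  then have "\<pi> x \<in> cyl l y n" using cyl_self[OF x] by blast
  then show "\<forall>i<n. \<phi> (x i) = y i" using phi[OF x] by (simp add: cyl_def)
next
  assume h: "\<forall>i<n. \<phi> (x i) = y i"
  show "\<pi> ` cyl k x n \<subseteq> cyl l y n"
  proof
    fix u assume "u \<in> \<pi> ` cyl k x n"
    then obtain z where z: "z \<in> cyl k x n" "u = \<pi> z" by blast
    then have zf: "z \<in> fullshift k" "\<forall>i<n. z i = x i" by (auto simp: cyl_def)
    show "u \<in> cyl l y n" using z(2) pi_full[OF zf(1)] phi[OF zf(1)] zf(2) h by (simp add: cyl_def)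
  qed
qed

lemma birkhoff_g: "birkhoff (gfun k f \<phi>) n y = birkhoff f n (sec k \<phi> y) + (\<Sum>i<n. ln (real (Nc k \<phi> (y i))))"
  unfolding birkhoff_def gfun_def by (simp add: sum.distrib shift_pow sec_def)

definition ext1 :: "nat \<Rightarrow> (nat \<Rightarrow> nat) \<Rightarrow> (nat \<Rightarrow> nat)" where
  "ext1 n w = (\<lambda>i. if i < n then w i else 1)"

lemma card_pc:
  assumes y: "y \<in> fullshift l"
  shows "card (preimage_cyls k l \<pi> n y) = (\<Prod>i<n. Nc k \<phi> (y i))"
proof -
  have k1: "k \<ge> 1" using psi_prop(1)[of "y 0"] y by (auto simp: fullshift_def)
  define W where "W = Pi\<^sub>E {..<n} (\<lambda>i. {a\<in>{1..k}. \<phi> a = y i})"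
  have extW: "ext1 n w \<in> fullshift k" if "w \<in> W" for w
    using that k1 by (auto simp: W_def ext1_def fullshift_def PiE_iff)
  have eq: "preimage_cyls k l \<pi> n y = (\<lambda>w. cyl k (ext1 n w) n) ` W"
  proof (intro set_eqI iffI)
    fix c assume "c \<in> preimage_cyls k l \<pi> n y"
    then obtain x where x: "x \<in> fullshift k" "c = cyl k x n" "\<pi> ` c \<subseteq> cyl l y n"
      unfolding preimage_cyls_def by blast
    have h: "\<forall>i<n. \<phi> (x i) = y i" using pc_iff[OF x(1)] x by simp
    define w where "w = restrict x {..<n}"
    have "w \<in> W" using h x(1) by (auto simp: W_def w_def fullshift_def)
    moreover have "c = cyl k (ext1 n w) n" using x(2) by (auto intro!: cyl_eqI simp: ext1_def w_def)
    ultimately show "c \<in> (\<lambda>w. cyl k (ext1 n w) n) ` W" by blast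
  next
    fix c assume "c \<in> (\<lambda>w. cyl k (ext1 n w) n) ` W"
    then obtain w where w: "w \<in> W" "c = cyl k (ext1 n w) n" by blast
    have "\<forall>i<n. \<phi> (ext1 n w i) = y i" using w(1) by (auto simp: W_def ext1_def PiE_iff)
    then have "\<pi> ` c \<subseteq> cyl l y n" using pc_iff[OF extW[OF w(1)]] w(2) by simp
    then show "c \<in> preimage_cyls k l \<pi> n y" unfolding preimage_cyls_def using extW[OF w(1)] w(2) by blast
  qed
  have inj: "inj_on (\<lambda>w. cyl k (ext1 n w) n) W"
  proof (rule inj_onI)
    fix w w' assume ww: "w \<in> W" "w' \<in> W" "cyl k (ext1 n w) n = cyl k (ext1 n w') n"
    then have "ext1 n w \<in> cyl k (ext1 n w') n" using cyl_self[OF extW[OF ww(1)], of n] by simp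
    then have "\<forall>i<n. w i = w' i" by (auto simp: cyl_def ext1_def)
    then show "w = w'" using ww(1,2) unfolding W_def by (intro PiE_ext) auto
  qed
  have "card (preimage_cyls k l \<pi> n y) = card W" using eq card_image[OF inj] by simp
  also have "\<dots> = (\<Prod>i<n. card {a\<in>{1..k}. \<phi> a = y i})" unfolding W_def by (simp add: card_PiE)
  finally show ?thesis by (simp add: Nc_def)
qed


lemma pi_meas: "\<pi> \<in> measurable (shift_borel k) (shift_borel l)"
proof -
  have c: "continuous_on (fullshift k) \<pi>" using fac by (simp add: one_block_factor_def)
  have "\<pi> \<in> borel_measurable (restrict_space borel (fullshift k))"
    by (rule borel_measurable_continuous_on_restrict[OF c])
  then show ?thesis unfolding shift_borel_def
    by (intro measurable_restrict_space2) (auto simp: space_restrict_space pi_full)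
qed

lemma g_Bow: assumes fB: "f \<in> Bow k" shows "gfun k f \<phi> \<in> Bow l"
proof -
  have fc: "continuous_on (fullshift k) f" using fB by (simp add: Bow_def)
  obtain Bf where Bf: "\<And>n z z'. z \<in> fullshift k \<Longrightarrow> z' \<in> fullshift k \<Longrightarrow> (\<forall>i<n. z i = z' i) \<Longrightarrow>
      birkhoff f n z - birkhoff f n z' \<le> Bf" using fB unfolding Bow_def by blast
  have sc: "continuous_on (fullshift l) (sec k \<phi>)"
    unfolding sec_def
  proof (intro continuous_on_coordinatewise_then_product)
    fix i
    show "continuous_on (fullshift l) (\<lambda>y. psi k \<phi> (y i))"
      by (rule continuous_on_compose2[of UNIV "psi k \<phi>" "fullshift l" "\<lambda>y. y i"])
         (auto intro: continuous_on_subset[OF continuous_on_product_coordinates])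
  qed
  have c1: "continuous_on (fullshift l) (\<lambda>y. f (sec k \<phi> y))"
    by (rule continuous_on_compose2[OF fc sc]) (auto intro: sec_full)
  have c2: "continuous_on (fullshift l) (\<lambda>y. ln (real (Nc k \<phi> (y 0))))"
    by (rule continuous_on_compose2[of UNIV "\<lambda>j. ln (real (Nc k \<phi> j))" "fullshift l" "\<lambda>y. y 0"])
       (auto intro: continuous_on_subset[OF continuous_on_product_coordinates])
  have cont: "continuous_on (fullshift l) (gfun k f \<phi>)"
    unfolding gfun_def by (intro continuous_on_add c1 c2)
  have "birkhoff (gfun k f \<phi>) n z - birkhoff (gfun k f \<phi>) n z' \<le> Bf"
    if z: "z \<in> fullshift l" "z' \<in> fullshift l" "\<forall>i<n. z i = z' i" for n z z'
  proof -
    have "(\<Sum>i<n. ln (real (Nc k \<phi> (z i)))) = (\<Sum>i<n. ln (real (Nc k \<phi> (z' i))))"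
      using z(3) by (intro sum.cong) auto
    moreover have "birkhoff f n (sec k \<phi> z) - birkhoff f n (sec k \<phi> z') \<le> Bf"
      using Bf[OF sec_full[OF z(1)] sec_full[OF z(2)]] z(3) by (simp add: sec_def)
    ultimately show ?thesis unfolding birkhoff_g by simp
  qed
  then show ?thesis using cont unfolding Bow_def by blast
qed

context
  fixes \<mu> :: "(nat \<Rightarrow> nat) measure" and f :: "(nat \<Rightarrow> nat) \<Rightarrow> real"
  assumes gib: "inv_gibbs k f \<mu>"
begin

lemma pi_meas_mu: "\<pi> \<in> measurable \<mu> (shift_borel l)"
  using pi_meas measurable_cong_sets[OF inv_gibbs_D(2)[OF gib] refl, of "shift_borel l"] by simp

lemma nu_prob: "prob_space (distr \<mu> (shift_borel l) \<pi>)"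
  using prob_space.prob_space_distr[OF inv_gibbs_D(1)[OF gib] pi_meas_mu] .

lemma nu_shift_inv: "shift_invariant (distr \<mu> (shift_borel l) \<pi>)"
proof -
  let ?nu = "distr \<mu> (shift_borel l) \<pi>"
  have s: "sets ?nu = sets (shift_borel l)" by simp
  have sm: "shift \<in> measurable ?nu ?nu" using shift_meas measurable_cong_sets[OF s s] by simp
  have "distr ?nu ?nu shift = distr ?nu (shift_borel l) shift" by (rule distr_cong) auto
  also have "\<dots> = distr \<mu> (shift_borel l) (shift \<circ> \<pi>)"
    by (rule distr_distr[OF shift_meas pi_meas_mu])
  also have "\<dots> = distr \<mu> (shift_borel l) (\<pi> \<circ> shift)"
    using fac inv_gibbs_D(3)[OF gib] by (intro distr_cong) (auto simp: one_block_factor_def)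
  also have "\<dots> = distr (distr \<mu> \<mu> shift) (shift_borel l) \<pi>"
    by (rule distr_distr[OF pi_meas_mu inv_gibbs_D(4)[OF gib], symmetric])
  also have "\<dots> = ?nu" using inv_gibbs_D(5)[OF gib] by simp
  finally show ?thesis unfolding shift_invariant_def using sm by simp
qed

lemma pc_sub_LC: "preimage_cyls k l \<pi> n y \<subseteq> LC k n"
  unfolding preimage_cyls_def LC_def by blast

lemma nu_cyl:
  assumes y: "y \<in> fullshift l"
  shows "measure (distr \<mu> (shift_borel l) \<pi>) (cyl l y n) = (\<Sum>c\<in>preimage_cyls k l \<pi> n y. measure \<mu> c)"
proof -
  let ?pc = "preimage_cyls k l \<pi> n y"
  have spm: "space \<mu> = fullshift k" using inv_gibbs_D(3)[OF gib] .
  have "measure (distr \<mu> (shift_borel l) \<pi>) (cyl l y n) = measure \<mu> (\<pi> -` cyl l y n \<inter> space \<mu>)"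
    by (rule measure_distr[OF pi_meas_mu cyl_sets])
  also have "\<pi> -` cyl l y n \<inter> space \<mu> = \<Union>(id ` ?pc)"
  proof (intro set_eqI iffI)
    fix x assume x: "x \<in> \<pi> -` cyl l y n \<inter> space \<mu>"
    then have xf: "x \<in> fullshift k" using spm by simp
    have "\<forall>i<n. \<phi> (x i) = y i" using x phi[OF xf] by (auto simp: cyl_def)
    then have "cyl k x n \<in> ?pc" using pc_iff[OF xf] xf unfolding preimage_cyls_def by blast
    then show "x \<in> \<Union>(id ` ?pc)" using cyl_self[OF xf] by auto
  next
    fix x assume "x \<in> \<Union>(id ` ?pc)"
    then obtain c where c: "c \<in> ?pc" "x \<in> c" by auto
    then obtain x' where x': "x' \<in> fullshift k" "c = cyl k x' n" "\<pi> ` c \<subseteq> cyl l y n"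
      unfolding preimage_cyls_def by blast
    have "x \<in> fullshift k" using c(2) x'(2) by (simp add: cyl_def)
    then show "x \<in> \<pi> -` cyl l y n \<inter> space \<mu>" using c(2) x'(3) spm by auto
  qed
  also have "measure \<mu> (\<Union>(id ` ?pc)) = (\<Sum>c\<in>?pc. measure \<mu> (id c))"
  proof (rule finite_measure.finite_measure_finite_Union[OF gibbs_fm[OF gib]])
    show "finite ?pc" using finite_subset[OF pc_sub_LC finite_LC] .
    show "id ` ?pc \<subseteq> sets \<mu>" using LC_sets[OF subsetD[OF pc_sub_LC]] inv_gibbs_D(2)[OF gib] by auto
    show "disjoint_family_on id ?pc" unfolding disjoint_family_on_def using pc_sub_LC cyl_disj
      by (metis id_apply subsetD)
  qed
  finally show ?thesis by simp
qed

lemma E_props: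
  assumes E: "E \<in> E_sets k l \<pi> n y"
  shows "E \<subseteq> fullshift k" "bij_betw (\<lambda>x. cyl k x n) E (preimage_cyls k l \<pi> n y)"
proof -
  let ?pc = "preimage_cyls k l \<pi> n y"
  have E1: "E \<subseteq> \<Union>?pc" and E2: "\<And>c. c \<in> ?pc \<Longrightarrow> \<exists>!x. x \<in> E \<and> x \<in> c"
    using E unfolding E_sets_def by auto
  have memc: "x \<in> fullshift k \<and> cyl k x n \<in> ?pc" if xE: "x \<in> E" for x
  proof -
    obtain c where c: "c \<in> ?pc" "x \<in> c" using E1 xE by blast
    then obtain x' where x': "x' \<in> fullshift k" "c = cyl k x' n" unfolding preimage_cyls_def by blast
    have "cyl k x n = c" using cyl_mem_eq[of x k x' n] c(2) x'(2) by simp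
    moreover have "x \<in> fullshift k" using c(2) x'(2) by (simp add: cyl_def)
    ultimately show ?thesis using c(1) by simp
  qed
  then show "E \<subseteq> fullshift k" by blast
  show "bij_betw (\<lambda>x. cyl k x n) E ?pc"
    unfolding bij_betw_def
  proof (intro conjI)
    show "inj_on (\<lambda>x. cyl k x n) E"
    proof (rule inj_onI)
      fix x x' assume xx: "x \<in> E" "x' \<in> E" "cyl k x n = cyl k x' n"
      have "x \<in> cyl k x n" "x' \<in> cyl k x n"
        using cyl_self memc xx by (metis)+
      then show "x = x'" using E2[of "cyl k x n"] memc[OF xx(1)] xx(1,2) by blast
    qed
    show "(\<lambda>x. cyl k x n) ` E = ?pc"
    proof (intro set_eqI iffI)
      fix c assume "c \<in> (\<lambda>x. cyl k x n) ` E"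
      then show "c \<in> ?pc" using memc by blast
    next
      fix c assume c: "c \<in> ?pc"
      then obtain x where x: "x \<in> E" "x \<in> c" using E2 by blast
      obtain x' where x': "c = cyl k x' n" using c unfolding preimage_cyls_def by blast
      have "cyl k x n = c" using cyl_mem_eq[of x k x' n] x(2) x' by simp
      then show "c \<in> (\<lambda>x. cyl k x n) ` E" using x(1) by blast
    qed
  qed
qed

lemma E_nonempty: "E_sets k l \<pi> n y \<noteq> {}"
proof -
  let ?pc = "preimage_cyls k l \<pi> n y"
  define E0 where "E0 = (\<lambda>c. SOME x. x \<in> c) ` ?pc"
  have ne: "\<exists>x. x \<in> c" if "c \<in> ?pc" for c
    using that cyl_self unfolding preimage_cyls_def by blast
  have inc: "(SOME x. x \<in> c) \<in> c" if "c \<in> ?pc" for c using someI_ex[OF ne[OF that]] .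
  have "E0 \<in> E_sets k l \<pi> n y"
    unfolding E_sets_def
  proof (intro CollectI conjI ballI)
    show "E0 \<subseteq> \<Union>?pc" unfolding E0_def using inc by blast
    fix c assume c: "c \<in> ?pc"
    show "\<exists>!x. x \<in> E0 \<and> x \<in> c"
    proof (rule ex1I[of _ "SOME x. x \<in> c"])
      show "(SOME x. x \<in> c) \<in> E0 \<and> (SOME x. x \<in> c) \<in> c" using inc[OF c] c unfolding E0_def by blast
      fix x assume x: "x \<in> E0 \<and> x \<in> c"
      then obtain c' where c': "c' \<in> ?pc" "x = (SOME x. x \<in> c')" unfolding E0_def by blast
      have "x \<in> c'" using inc[OF c'(1)] c'(2) by simp
      then have "c' \<inter> c \<noteq> {}" using x by blast
      then have "c' = c" using cyl_disj pc_sub_LC c c'(1) by blast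
      then show "x = (SOME x. x \<in> c)" using c'(2) by simp
    qed
  qed
  then show ?thesis by blast
qed

lemma gbar_bounds:
  assumes b: "gibbs_bd k f \<mu> P C0" and y: "y \<in> fullshift l"
  shows "measure (distr \<mu> (shift_borel l) \<pi>) (cyl l y n) \<le> C0 * exp (- real n * P) * gbar k l \<pi> f n y"
    "exp (- real n * P) * gbar k l \<pi> f n y \<le> C0 * measure (distr \<mu> (shift_borel l) \<pi>) (cyl l y n)"
proof -
  let ?nu = "distr \<mu> (shift_borel l) \<pi>"
  let ?pc = "preimage_cyls k l \<pi> n y"
  let ?F = "\<lambda>E. \<Sum>x\<in>E. exp (birkhoff f n x)"
  have C0: "C0 > 0" using b by (simp add: gibbs_bd_def)
  have ep: "exp (- real n * P) > 0" by simp
  have sumE: "measure ?nu (cyl l y n) = (\<Sum>x\<in>E. measure \<mu> (cyl k x n))" if E: "E \<in> E_sets k l \<pi> n y" for E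
    using nu_cyl[OF y] sum.reindex_bij_betw[OF E_props(2)[OF E], of "measure \<mu>"] by simp
  have ex: "exp (- real n * P + birkhoff f n x) = exp (- real n * P) * exp (birkhoff f n x)" for x
    by (subst exp_add[symmetric]) simp
  have up: "measure ?nu (cyl l y n) \<le> C0 * exp (- real n * P) * ?F E" if E: "E \<in> E_sets k l \<pi> n y" for E
  proof -
    have "measure ?nu (cyl l y n) \<le> (\<Sum>x\<in>E. C0 * exp (- real n * P) * exp (birkhoff f n x))"
      unfolding sumE[OF E]
    proof (rule sum_mono)
      fix x assume "x \<in> E"
      then have "x \<in> fullshift k" using E_props(1)[OF E] by blast
      then have "measure \<mu> (cyl k x n) < C0 * exp (- real n * P + birkhoff f n x)"
        using b unfolding gibbs_bd_def by blast
      then show "measure \<mu> (cyl k x n) \<le> C0 * exp (- real n * P) * exp (birkhoff f n x)"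
        by (metis ex less_imp_le mult.assoc)
    qed
    then show ?thesis by (simp add: sum_distrib_left)
  qed
  have low: "exp (- real n * P) * ?F E \<le> C0 * measure ?nu (cyl l y n)" if E: "E \<in> E_sets k l \<pi> n y" for E
  proof -
    have "exp (- real n * P) * ?F E = (\<Sum>x\<in>E. exp (- real n * P + birkhoff f n x))"
      unfolding sum_distrib_left ex ..
    also have "\<dots> \<le> (\<Sum>x\<in>E. C0 * measure \<mu> (cyl k x n))"
    proof (rule sum_mono)
      fix x assume "x \<in> E"
      then have "x \<in> fullshift k" using E_props(1)[OF E] by blast
      then show "exp (- real n * P + birkhoff f n x) \<le> C0 * measure \<mu> (cyl k x n)"
        using b unfolding gibbs_bd_def by (auto intro: less_imp_le)
    qed
    also have "\<dots> = C0 * measure ?nu (cyl l y n)" unfolding sumE[OF E] by (simp add: sum_distrib_left)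
    finally show ?thesis .
  qed
  have Fb: "?F E \<le> C0 * measure ?nu (cyl l y n) / exp (- real n * P)" if E: "E \<in> E_sets k l \<pi> n y" for E
    using low[OF E] ep by (simp add: le_divide_eq mult.commute)
  have bdd: "bdd_above (?F ` E_sets k l \<pi> n y)" using Fb by (intro bdd_aboveI2) auto
  have gb: "gbar k l \<pi> f n y \<le> C0 * measure ?nu (cyl l y n) / exp (- real n * P)"
    unfolding gbar_def by (rule cSUP_least[OF E_nonempty Fb])
  then show "exp (- real n * P) * gbar k l \<pi> f n y \<le> C0 * measure ?nu (cyl l y n)"
    using ep by (simp add: le_divide_eq mult.commute)
  obtain E where E: "E \<in> E_sets k l \<pi> n y" using E_nonempty by blast
  have "?F E \<le> gbar k l \<pi> f n y" unfolding gbar_def by (rule cSUP_upper[OF E bdd])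
  then have "C0 * exp (- real n * P) * ?F E \<le> C0 * exp (- real n * P) * gbar k l \<pi> f n y"
    using C0 ep by (intro mult_left_mono) auto
  then show "measure ?nu (cyl l y n) \<le> C0 * exp (- real n * P) * gbar k l \<pi> f n y"
    using up[OF E] by linarith
qed

lemma nu_gibbs:
  assumes bound: "\<exists>A>0. \<forall>n\<ge>1. \<forall>y\<in>fullshift l. \<forall>x\<in>fullshift k. \<pi> ` cyl k x n \<subseteq> cyl l y n \<longrightarrow>
        1 / A \<le> gbar k l \<pi> f n y / (real (card (preimage_cyls k l \<pi> n y)) * exp (birkhoff f n x)) \<and>
        gbar k l \<pi> f n y / (real (card (preimage_cyls k l \<pi> n y)) * exp (birkhoff f n x)) \<le> A"
  shows "inv_gibbs l (gfun k f \<phi>) (distr \<mu> (shift_borel l) \<pi>)"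
proof -
  let ?nu = "distr \<mu> (shift_borel l) \<pi>"
  let ?g = "gfun k f \<phi>"
  obtain P C0 where b: "gibbs_bd k f \<mu> P C0" using inv_gibbs_D(6)[OF gib] by blast
  have C0: "C0 > 0" using b by (simp add: gibbs_bd_def)
  obtain A where A: "A > 0" and bA: "\<And>n y x. n \<ge> 1 \<Longrightarrow> y \<in> fullshift l \<Longrightarrow> x \<in> fullshift k \<Longrightarrow> \<pi> ` cyl k x n \<subseteq> cyl l y n \<Longrightarrow>
        1 / A \<le> gbar k l \<pi> f n y / (real (card (preimage_cyls k l \<pi> n y)) * exp (birkhoff f n x)) \<and>
        gbar k l \<pi> f n y / (real (card (preimage_cyls k l \<pi> n y)) * exp (birkhoff f n x)) \<le> A"
    using bound by blast
  define C1 where "C1 = 2 * C0 * A + 2"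
  have CA: "C0 * A > 0" using C0 A by simp
  have C1: "C1 > 0" "C1 > 1" "C0 * A < C1" using CA unfolding C1_def by (simp_all add: mult.assoc mult.commute[of A C0])
  have P1: "prob_space ?nu" using nu_prob .
  have spnu: "space ?nu = fullshift l" by (simp add: space_sb)
  have key: "1 / C1 < measure ?nu (cyl l z n) / exp (- real n * P + birkhoff ?g n z) \<and>
         measure ?nu (cyl l z n) / exp (- real n * P + birkhoff ?g n z) < C1"
    if z: "z \<in> fullshift l" for z n
  proof (cases "n = 0")
    case True
    have "cyl l z 0 = fullshift l" by (auto simp: cyl_def)
    then have "measure ?nu (cyl l z n) = 1" using True prob_space.prob_space[OF P1] spnu by simp
    moreover have "birkhoff ?g n z = 0" using True by (simp add: birkhoff_def)
    ultimately show ?thesis using True C1 by simp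
  next
    case False
    then have n1: "n \<ge> 1" by simp
    define Q where "Q = real (card (preimage_cyls k l \<pi> n z)) * exp (birkhoff f n (sec k \<phi> z))"
    have Ncp: "real (Nc k \<phi> (z i)) \<ge> 1" for i using Nc_pos[of "z i"] z by (simp add: fullshift_def)
    have expg: "exp (birkhoff ?g n z) = Q"
    proof -
      have "exp (\<Sum>i<n. ln (real (Nc k \<phi> (z i)))) = (\<Prod>i<n. exp (ln (real (Nc k \<phi> (z i)))))"
        by (rule exp_sum) simp
      also have "\<dots> = (\<Prod>i<n. real (Nc k \<phi> (z i)))"
        using Ncp by (intro prod.cong refl exp_ln) (auto intro: less_le_trans[of 0 1])
      also have "\<dots> = real (card (preimage_cyls k l \<pi> n z))" using card_pc[OF z] by simp
      finally show ?thesis unfolding birkhoff_g Q_def exp_add by simp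
    qed
    have cardpos: "real (card (preimage_cyls k l \<pi> n z)) > 0"
    proof -
      have "(\<Prod>i<n. Nc k \<phi> (z i)) > 0" using Nc_pos z by (intro prod_pos) (auto simp: fullshift_def Suc_le_eq)
      then have "card (preimage_cyls k l \<pi> n z) > 0" by (simp only: card_pc[OF z])
      then show ?thesis by simp
    qed
    have Q: "Q > 0" unfolding Q_def using cardpos by simp
    have sz: "sec k \<phi> z \<in> fullshift k" using sec_full[OF z] .
    have incl: "\<pi> ` cyl k (sec k \<phi> z) n \<subseteq> cyl l z n"
      using pc_iff[OF sz] psi_prop(2) z by (auto simp: sec_def fullshift_def)
    have bb: "1 / A \<le> gbar k l \<pi> f n z / Q" "gbar k l \<pi> f n z / Q \<le> A"
      using bA[OF n1 z sz incl] unfolding Q_def by auto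
    have g1: "Q \<le> A * gbar k l \<pi> f n z" using bb(1) Q A by (simp add: divide_le_eq le_divide_eq mult.commute)
    have g2: "gbar k l \<pi> f n z \<le> A * Q" using bb(2) Q by (simp add: divide_le_eq mult.commute)
    define E where "E = exp (- real n * P)"
    have E: "E > 0" unfolding E_def by simp
    have den: "exp (- real n * P + birkhoff ?g n z) = E * Q" unfolding E_def exp_add expg ..
    have EQ: "E * Q > 0" using E Q by simp
    note gb = gbar_bounds[OF b z, of n]
    have u: "measure ?nu (cyl l z n) < C1 * (E * Q)"
    proof -
      have "measure ?nu (cyl l z n) \<le> C0 * E * gbar k l \<pi> f n z" using gb(1) unfolding E_def .
      also have "\<dots> \<le> C0 * E * (A * Q)" using g2 C0 E by (intro mult_left_mono) auto
      also have "\<dots> = (C0 * A) * (E * Q)" by (simp add: algebra_simps)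
      also have "\<dots> < C1 * (E * Q)" using C1(3) EQ by (intro mult_strict_right_mono) auto
      finally show ?thesis .
    qed
    have l: "E * Q < C1 * measure ?nu (cyl l z n)"
    proof -
      have "E * Q \<le> E * (A * gbar k l \<pi> f n z)" using g1 E by (intro mult_left_mono) auto
      also have "\<dots> = A * (E * gbar k l \<pi> f n z)" by (simp add: algebra_simps)
      also have "\<dots> \<le> A * (C0 * measure ?nu (cyl l z n))" using gb(2) A unfolding E_def by (intro mult_left_mono) auto
      finally have *: "E * Q \<le> (C0 * A) * measure ?nu (cyl l z n)" by (simp add: algebra_simps)
      then have pos: "measure ?nu (cyl l z n) > 0" using EQ C0 A
        by (metis measure_nonneg mult_eq_0_iff not_less order.antisym order.strict_trans1)
      have "(C0 * A) * measure ?nu (cyl l z n) < C1 * measure ?nu (cyl l z n)"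
        using C1(3) pos by (intro mult_strict_right_mono) auto
      then show ?thesis using * by linarith
    qed
    show ?thesis unfolding den using u l EQ C1
      by (simp add: divide_less_eq less_divide_eq mult.commute)
  qed
  show ?thesis unfolding inv_gibbs_def
    using P1 nu_shift_inv key C1(1) by auto
qed

end

end

theorem proposition5p12:
  fixes k l :: nat and \<pi> :: "(nat \<Rightarrow> nat) \<Rightarrow> (nat \<Rightarrow> nat)"
    and f :: "(nat \<Rightarrow> nat) \<Rightarrow> real" and \<mu> :: "(nat \<Rightarrow> nat) measure"
  assumes fac: "one_block_factor k l \<pi>"
    and fBow: "f \<in> Bow k"
    and gibbs: "inv_gibbs k f \<mu>"
    and bound: "\<exists>A>0. \<forall>n\<ge>1. \<forall>y\<in>fullshift l. \<forall>x\<in>fullshift k. \<pi> ` cyl k x n \<subseteq> cyl l y n \<longrightarrow>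
        1 / A \<le> gbar k l \<pi> f n y / (real (card (preimage_cyls k l \<pi> n y)) * exp (birkhoff f n x)) \<and>
        gbar k l \<pi> f n y / (real (card (preimage_cyls k l \<pi> n y)) * exp (birkhoff f n x)) \<le> A"
  shows "\<exists>g. g \<in> Bow l \<and> inv_gibbs l g (distr \<mu> (shift_borel l) \<pi>) \<and>
           (\<forall>M. inv_gibbs l g M \<longrightarrow> M = distr \<mu> (shift_borel l) \<pi>)"
proof -
  obtain \<phi> where phi: "\<And>x i. x \<in> fullshift k \<Longrightarrow> \<pi> x i = \<phi> (x i)"
    using fac unfolding one_block_factor_def by blast
  have "gfun k f \<phi> \<in> Bow l" using g_Bow[OF fac phi fBow] .
  moreover have G: "inv_gibbs l (gfun k f \<phi>) (distr \<mu> (shift_borel l) \<pi>)"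
    using nu_gibbs[OF fac phi gibbs bound] .
  moreover have "\<forall>M. inv_gibbs l (gfun k f \<phi>) M \<longrightarrow> M = distr \<mu> (shift_borel l) \<pi>"
    using gibbs_unique G by blast
  ultimately show ?thesis by blast
qed

end
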